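(* Let $u,\phi_1,\dots,\phi_N$ be a solution of the $n$-th KdV equation with self-consistent sources of degree $N$ (with distinct constants $\lambda_1,\dots,\lambda_N$ and constant $\alpha$). Fix a constant $\eta$, and let $f_1$ satisfy the Lax pair $$f_{1,xx}+(\xi_1+u)f_1=0,\qquad f_{1,t}=Q^{(n,N)}f_1$$ with spectral parameter $\lambda=\xi_1$. For any $\psi$ satisfying the Lax pair $\psi_{xx}+(\lambda+u)\psi=0$, $\psi_t=Q^{(n,N)}\psi$ with spectral parameter $\lambda$ (and the same $\eta$), define the Darboux transformation $$\bar\psi=\psi_x-\frac{f_{1,x}}{f_1}\psi,\qquad \bar u=u+2\partial^2\ln f_1,\qquad \bar\phi_j=\frac{1}{\sqrt{\lambda_j-\xi_1}}\Big[\phi_{j,x}-\frac{f_{1,x}}{f_1}\phi_j\Big],\quad j=1,\dots,N.$$ Then $$\bar\psi_{xx}+(\lambda+\bar u)\bar\psi=0,\qquad \bar\psi_t=A^{(n)}(\bar u,\lambda)\bar\psi+\eta\bar\psi+\alpha\sum_{j=1}^N\bar\phi_j\,\partial^{-1}(\bar\phi_j\bar\psi),$$ and $\bar u,\bar\phi_1,\dots,\bar\phi_N$ satisfy the $n$-th KdV equation with self-consistent sources of degree $N$: $$\bar u_t=\partial\Big[-2b_{n+2}[\bar u]-2\alpha\sum_{j=1}^N\bar\phi_j^2\Big],\qquad \bar\phi_{j,xx}+(\lambda_j+\bar u)\bar\phi_j=0,\ j=1,\dots,N.$$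
   Context: Let $\partial=\partial/\partial x$ and $\partial^{-1}=\int_{-\infty}^x\cdot\,dx$, so $\partial\partial^{-1}=\partial^{-1}\partial=1$; all functions of $(x,t)$ are smooth and decay as $x\to-\infty$ sufficiently fast that all integrals $\partial^{-1}(\cdot)$ appearing converge (in particular products of eigenfunctions such as $\phi_j\psi$ decay at $x=-\infty$). For a potential $u(x,t)$ let $L=-\frac14\partial^2-u+\frac12\partial^{-1}u_x$, and define $b_0=0$, $b_1=1$, $b_{k+1}=Lb_k$ for $k\ge1$ (so $b_{k+1}=-\frac12L^{k-1}u$), $a_k=-\frac12 b_{k,x}$ for $k\ge0$; write $b_k[u]$ to indicate dependence on $u$. Fix an integer $n\ge0$ and write $t=t_n$. Define the differential operator $A^{(n)}(u,\lambda)=\sum_{i=0}^{n+1}(a_i+b_i\partial)\lambda^{n+1-i}$. The $n$-th KdV equation with self-consistent sources of degree $N$ (constant $\alpha$, distinct constants $\lambda_j$) is the system $u_t=\partial\big[-2b_{n+2}[u]-2\alpha\sum_{j=1}^N\phi_j^2\big]$, $\phi_{j,xx}+(\lambda_j+u)\phi_j=0$, $j=1,\dots,N$. For a constant $\eta$ and spectral parameter $\lambda$, $Q^{(n,N)}$ denotes the operator $Q^{(n,N)}\psi=A^{(n)}(u,\lambda)\psi+\eta\psi+\alpha\sum_{j=1}^N\phi_j\,\partial^{-1}(\phi_j\psi)$. *)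

theory Defs
  imports "HOL-Analysis.Analysis"
begin

text \<open>Functions of (x,t), complex-valued (complex values are needed because of
  the factor 1/sqrt(lambda_j - xi_1)).\<close>
type_synonym fn = "real \<Rightarrow> real \<Rightarrow> complex"

definition px :: "fn \<Rightarrow> fn" where
  "px f = (\<lambda>x t. vector_derivative (\<lambda>y. f y t) (at x))"

definition pt :: "fn \<Rightarrow> fn" where
  "pt f = (\<lambda>x t. vector_derivative (\<lambda>s. f x s) (at t))"

definition pinv :: "fn \<Rightarrow> fn" where
  "pinv g = (\<lambda>x t. integral {..x} (\<lambda>y. g y t))"

fun pd :: "bool list \<Rightarrow> fn \<Rightarrow> fn" where
  "pd [] f = f"
| "pd (True # ds) f = px (pd ds f)"
| "pd (False # ds) f = pt (pd ds f)"

definition smooth :: "fn \<Rightarrow> bool" where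
  "smooth f \<longleftrightarrow> (\<forall>ds x t. (\<lambda>p. pd ds f (fst p) (snd p)) differentiable (at (x, t)))"

definition decaying :: "fn \<Rightarrow> bool" where
  "decaying f \<longleftrightarrow> smooth f
     \<and> (\<forall>ds t. ((\<lambda>x. pd ds f x t) \<longlongrightarrow> 0) at_bot)
     \<and> (\<forall>ds x t. (\<lambda>y. pd ds f y t) absolutely_integrable_on {..x})"

definition Lop :: "fn \<Rightarrow> fn \<Rightarrow> fn" where
  "Lop u b = (\<lambda>x t. - (1/4) * px (px b) x t - u x t * b x t
                    + (1/2) * pinv (\<lambda>y s. px u y s * b y s) x t)"

fun bseq :: "fn \<Rightarrow> nat \<Rightarrow> fn" where
  "bseq u 0 = (\<lambda>x t. 0)"
| "bseq u (Suc 0) = (\<lambda>x t. 1)"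
| "bseq u (Suc (Suc k)) = Lop u (bseq u (Suc k))"

definition aseq :: "fn \<Rightarrow> nat \<Rightarrow> fn" where
  "aseq u k = (\<lambda>x t. - (1/2) * px (bseq u k) x t)"

definition Aop :: "nat \<Rightarrow> fn \<Rightarrow> complex \<Rightarrow> fn \<Rightarrow> fn" where
  "Aop n u lam psi = (\<lambda>x t. \<Sum>i\<in>{0..n+1}.
      (aseq u i x t * psi x t + bseq u i x t * px psi x t) * lam ^ (n + 1 - i))"

definition Qop :: "nat \<Rightarrow> nat \<Rightarrow> complex \<Rightarrow> complex \<Rightarrow> fn \<Rightarrow> (nat \<Rightarrow> fn)
                    \<Rightarrow> complex \<Rightarrow> fn \<Rightarrow> fn" where
  "Qop n N alpha eta u phi lam psi = (\<lambda>x t. Aop n u lam psi x t + eta * psi x t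
      + alpha * (\<Sum>j\<in>{1..N}. phi j x t * pinv (\<lambda>y s. phi j y s * psi y s) x t))"

definition kdv_scs :: "nat \<Rightarrow> nat \<Rightarrow> complex \<Rightarrow> (nat \<Rightarrow> complex) \<Rightarrow> fn \<Rightarrow> (nat \<Rightarrow> fn) \<Rightarrow> bool" where
  "kdv_scs n N alpha lams u phi \<longleftrightarrow>
     (\<forall>x t. pt u x t = px (\<lambda>y s. - 2 * bseq u (n + 2) y s
                               - 2 * alpha * (\<Sum>j\<in>{1..N}. (phi j y s)\<^sup>2)) x t)
   \<and> (\<forall>j\<in>{1..N}. \<forall>x t. px (px (phi j)) x t + (lams j + u x t) * phi j x t = 0)"

definition lax_pair :: "nat \<Rightarrow> nat \<Rightarrow> complex \<Rightarrow> complex \<Rightarrow> fn \<Rightarrow> (nat \<Rightarrow> fn)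
                         \<Rightarrow> complex \<Rightarrow> fn \<Rightarrow> bool" where
  "lax_pair n N alpha eta u phi lam psi \<longleftrightarrow>
     (\<forall>x t. px (px psi) x t + (lam + u x t) * psi x t = 0)
   \<and> (\<forall>x t. pt psi x t = Qop n N alpha eta u phi lam psi x t)"

definition dt_psi :: "fn \<Rightarrow> fn \<Rightarrow> fn" where
  "dt_psi f1 psi = (\<lambda>x t. px psi x t - (px f1 x t / f1 x t) * psi x t)"

text \<open>u + 2 d^2 ln f1, with d ln f1 written as the logarithmic derivative f1_x / f1.\<close>
definition dt_u :: "fn \<Rightarrow> fn \<Rightarrow> fn" where
  "dt_u u f1 = (\<lambda>x t. u x t + 2 * px (\<lambda>y s. px f1 y s / f1 y s) x t)"

definition dt_phi :: "(nat \<Rightarrow> complex) \<Rightarrow> complex \<Rightarrow> fn \<Rightarrow> (nat \<Rightarrow> fn) \<Rightarrow> (nat \<Rightarrow> fn)" where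
  "dt_phi lams xi f1 phi = (\<lambda>j x t. (1 / csqrt (lams j - xi)) *
      (px (phi j) x t - (px f1 x t / f1 x t) * phi j x t))"

end

theory Submission
  imports Defs
begin

definition dd :: "(real \<Rightarrow> complex) \<Rightarrow> real \<Rightarrow> complex" where
  "dd h = (\<lambda>x. vector_derivative h (at x))"
definition dif :: "(real \<Rightarrow> complex) \<Rightarrow> bool" where
  "dif h \<longleftrightarrow> (\<forall>x. h differentiable (at x))"

lemma dif_hvd: "dif h \<Longrightarrow> (h has_vector_derivative dd h x) (at x)"
  unfolding dif_def dd_def using vector_derivative_works by blast

lemma hvd_dif: "(\<And>x. (h has_vector_derivative h' x) (at x)) \<Longrightarrow> dif h"
  unfolding dif_def differentiable_def has_vector_derivative_def by blast

lemma hvd_dd: "(\<And>x. (h has_vector_derivative h' x) (at x)) \<Longrightarrow> dd h = h'"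
  unfolding dd_def by (rule ext) (simp add: vector_derivative_at)

lemma hvd_both: "(\<And>x. (h has_vector_derivative h' x) (at x)) \<Longrightarrow> dif h \<and> dd h = h'"
  using hvd_dif hvd_dd by blast

lemma dif_const[simp]: "dif (\<lambda>x. c)" and dd_const[simp]: "dd (\<lambda>x. c) = (\<lambda>x. 0)"
  using hvd_both[of "\<lambda>x. c" "\<lambda>x. 0"] by (auto intro: derivative_eq_intros)

lemma dd_add: "dif g \<Longrightarrow> dif h \<Longrightarrow> dd (\<lambda>x. g x + h x) = (\<lambda>x. dd g x + dd h x)"
  and dif_add: "dif g \<Longrightarrow> dif h \<Longrightarrow> dif (\<lambda>x. g x + h x)"
  using hvd_both[of "\<lambda>x. g x + h x" "\<lambda>x. dd g x + dd h x"]
  by (auto intro!: has_vector_derivative_add dif_hvd)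

lemma dd_diff: "dif g \<Longrightarrow> dif h \<Longrightarrow> dd (\<lambda>x. g x - h x) = (\<lambda>x. dd g x - dd h x)"
  and dif_diff: "dif g \<Longrightarrow> dif h \<Longrightarrow> dif (\<lambda>x. g x - h x)"
  using hvd_both[of "\<lambda>x. g x - h x" "\<lambda>x. dd g x - dd h x"]
  by (auto intro!: has_vector_derivative_diff dif_hvd)

lemma dd_minus: "dif h \<Longrightarrow> dd (\<lambda>x. - h x) = (\<lambda>x. - dd h x)"
  and dif_minus: "dif h \<Longrightarrow> dif (\<lambda>x. - h x)"
  using hvd_both[of "\<lambda>x. - h x" "\<lambda>x. - dd h x"]
  by (auto intro!: has_vector_derivative_minus dif_hvd)

lemma dd_mult: "dif g \<Longrightarrow> dif h \<Longrightarrow> dd (\<lambda>x. g x * h x) = (\<lambda>x. g x * dd h x + dd g x * h x)"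
  and dif_mult: "dif g \<Longrightarrow> dif h \<Longrightarrow> dif (\<lambda>x. g x * h x)"
  using hvd_both[of "\<lambda>x. g x * h x" "\<lambda>x. g x * dd h x + dd g x * h x"]
  by (auto intro!: has_vector_derivative_mult dif_hvd)

lemma dd_cmult: "dif h \<Longrightarrow> dd (\<lambda>x. c * h x) = (\<lambda>x. c * dd h x)"
  and dif_cmult: "dif h \<Longrightarrow> dif (\<lambda>x. c * h x)"
  using dd_mult[of "\<lambda>x. c" h] dif_mult[of "\<lambda>x. c" h] by auto

lemma dd_sum: "finite A \<Longrightarrow> (\<And>i. i \<in> A \<Longrightarrow> dif (h i)) \<Longrightarrow>
     dd (\<lambda>x. \<Sum>i\<in>A. h i x) = (\<lambda>x. \<Sum>i\<in>A. dd (h i) x)"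
  and dif_sum: "finite A \<Longrightarrow> (\<And>i. i \<in> A \<Longrightarrow> dif (h i)) \<Longrightarrow> dif (\<lambda>x. \<Sum>i\<in>A. h i x)"
  using hvd_both[of "\<lambda>x. \<Sum>i\<in>A. h i x" "\<lambda>x. \<Sum>i\<in>A. dd (h i) x"]
  by (auto intro!: has_vector_derivative_sum dif_hvd)

lemma dif_cont: "dif h \<Longrightarrow> continuous_on UNIV h"
  unfolding dif_def by (meson differentiable_imp_continuous_on differentiable_on_def differentiable_at_withinI)

lemma dif_isCont: "dif h \<Longrightarrow> isCont h x"
  unfolding dif_def by (simp add: differentiable_imp_continuous_within)

definition sm :: "(real \<Rightarrow> complex) \<Rightarrow> bool" where
  "sm h \<longleftrightarrow> (\<forall>m. dif ((dd^^m) h))"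

lemma sm_dif: "sm h \<Longrightarrow> dif h"
  unfolding sm_def by (metis funpow_0)

lemma sm_dd: "sm h \<Longrightarrow> sm (dd h)"
  unfolding sm_def by (metis funpow_Suc_right o_apply)

lemma sm_ddn: "sm h \<Longrightarrow> sm ((dd^^m) h)"
  unfolding sm_def by (metis funpow_add o_apply)

lemma ddn_Suc: "(dd^^Suc m) h = (dd^^m) (dd h)"
  by (metis funpow_Suc_right o_apply)

lemma ddn_add: "(\<forall>k<m. dif ((dd^^k) p)) \<Longrightarrow> (\<forall>k<m. dif ((dd^^k) q)) \<Longrightarrow>
   (dd^^m) (\<lambda>x. p x + q x) = (\<lambda>x. (dd^^m) p x + (dd^^m) q x)"
proof (induction m arbitrary: p q)
  case 0 then show ?case by simp
next
  case (Suc m)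
  have "dif p" "dif q" using Suc.prems by (metis funpow_0 zero_less_Suc)+
  then have "(dd^^Suc m) (\<lambda>x. p x + q x) = (dd^^m) (\<lambda>x. dd p x + dd q x)"
    by (simp del: funpow.simps add: ddn_Suc dd_add)
  also have "\<dots> = (\<lambda>x. (dd^^m) (dd p) x + (dd^^m) (dd q) x)"
    using Suc.prems by (intro Suc.IH) (auto simp: ddn_Suc[symmetric])
  finally show ?case by (simp del: funpow.simps add: ddn_Suc)
qed

lemma sm_const[simp]: "sm (\<lambda>x. c)"
proof -
  have "(dd^^m) (\<lambda>x. c) = (\<lambda>x. if m = 0 then c else 0)" for m
    by (induction m) auto
  then show ?thesis unfolding sm_def by simp
qed

lemma ddn_const: "(dd^^Suc m) (\<lambda>x. c) = (\<lambda>x. 0)"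
  by (induction m) (auto simp: ddn_Suc)

lemma sm_add: "sm g \<Longrightarrow> sm h \<Longrightarrow> sm (\<lambda>x. g x + h x)"
  unfolding sm_def by (subst ddn_add) (auto intro: dif_add)

lemma ddn_add_sm: "sm g \<Longrightarrow> sm h \<Longrightarrow> (dd^^m) (\<lambda>x. g x + h x) = (\<lambda>x. (dd^^m) g x + (dd^^m) h x)"
  unfolding sm_def by (rule ddn_add) auto

lemma sm_mult_aux: "\<forall>g h. sm g \<longrightarrow> sm h \<longrightarrow> (\<forall>k\<le>m. dif ((dd^^k) (\<lambda>x. g x * h x)))"
proof (induction m)
  case 0 then show ?case by (auto intro: dif_mult sm_dif)
next
  case (Suc m)
  show ?case
  proof (intro allI impI)
    fix g h k assume g: "sm g" and h: "sm h" and k: "k \<le> Suc m"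
    show "dif ((dd^^k) (\<lambda>x. g x * h x))"
    proof (cases k)
      case 0 then show ?thesis using g h by (auto intro: dif_mult sm_dif)
    next
      case (Suc j)
      have a: "\<forall>k\<le>m. dif ((dd^^k) (\<lambda>x. g x * dd h x))"
        using Suc.IH g h sm_dd by blast
      have b: "\<forall>k\<le>m. dif ((dd^^k) (\<lambda>x. dd g x * h x))"
        using Suc.IH g h sm_dd by blast
      have "(dd^^k) (\<lambda>x. g x * h x) = (dd^^j) (\<lambda>x. g x * dd h x + dd g x * h x)"
        using Suc g h by (simp del: funpow.simps add: ddn_Suc dd_mult sm_dif)
      also have "\<dots> = (\<lambda>x. (dd^^j) (\<lambda>x. g x * dd h x) x + (dd^^j) (\<lambda>x. dd g x * h x) x)"
        using a b Suc k by (intro ddn_add) auto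
      finally show ?thesis using a b Suc k by (auto intro: dif_add)
    qed
  qed
qed

lemma sm_mult: "sm g \<Longrightarrow> sm h \<Longrightarrow> sm (\<lambda>x. g x * h x)"
  using sm_mult_aux unfolding sm_def by blast

lemma sm_cmult: "sm h \<Longrightarrow> sm (\<lambda>x. c * h x)"
  by (rule sm_mult) auto

lemma sm_minus: "sm h \<Longrightarrow> sm (\<lambda>x. - h x)"
  using sm_cmult[of h "-1"] by simp

lemma sm_diff: "sm g \<Longrightarrow> sm h \<Longrightarrow> sm (\<lambda>x. g x - h x)"
  using sm_add[of g "\<lambda>x. - h x"] sm_minus by simp

lemma sm_sum: "finite A \<Longrightarrow> (\<And>i. i \<in> A \<Longrightarrow> sm (h i)) \<Longrightarrow> sm (\<lambda>x. \<Sum>i\<in>A. h i x)"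
  by (induction A rule: finite_induct) (auto intro: sm_add)

definition lm :: "(real \<Rightarrow> complex) \<Rightarrow> bool" where
  "lm h \<longleftrightarrow> sm h \<and> (\<forall>m. \<exists>l. ((dd^^m) h \<longlongrightarrow> l) at_bot)"
definition z0 :: "(real \<Rightarrow> complex) \<Rightarrow> bool" where
  "z0 h \<longleftrightarrow> sm h \<and> (\<forall>m. ((dd^^m) h \<longlongrightarrow> 0) at_bot)"
definition zz :: "(real \<Rightarrow> complex) \<Rightarrow> bool" where
  "zz h \<longleftrightarrow> lm h \<and> z0 (dd h)"

lemma lm_sm: "lm h \<Longrightarrow> sm h" and z0_sm: "z0 h \<Longrightarrow> sm h" and zz_sm: "zz h \<Longrightarrow> sm h"
  unfolding lm_def z0_def zz_def by auto

lemma lm_lim: "lm h \<Longrightarrow> \<exists>l. (h \<longlongrightarrow> l) at_bot"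
  unfolding lm_def by (metis funpow_0)

lemma z0_lim: "z0 h \<Longrightarrow> (h \<longlongrightarrow> 0) at_bot"
  unfolding z0_def by (metis funpow_0)

lemma z0_lm: "z0 h \<Longrightarrow> lm h"
  unfolding z0_def lm_def by blast

lemma lm_dd: "lm h \<Longrightarrow> lm (dd h)"
  unfolding lm_def using sm_dd by (metis ddn_Suc)

lemma z0_dd: "z0 h \<Longrightarrow> z0 (dd h)"
  unfolding z0_def using sm_dd by (metis ddn_Suc)

lemma z0_zz: "z0 h \<Longrightarrow> zz h"
  unfolding zz_def using z0_lm z0_dd by blast

lemma zz_lm: "zz h \<Longrightarrow> lm h" and zz_dd: "zz h \<Longrightarrow> z0 (dd h)"
  unfolding zz_def by auto

lemma lm_const[simp]: "lm (\<lambda>x. c)"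
proof -
  have "(dd^^m) (\<lambda>x. c) = (\<lambda>x. if m = 0 then c else 0)" for m
    by (induction m) auto
  then show ?thesis unfolding lm_def by (auto intro: tendsto_const)
qed

lemma z0_const0[simp]: "z0 (\<lambda>x. 0)"
proof -
  have "(dd^^m) (\<lambda>x. 0) = (\<lambda>x. 0)" for m
    by (induction m) auto
  then show ?thesis unfolding z0_def by (auto intro: tendsto_const)
qed

lemma zz_const[simp]: "zz (\<lambda>x. c)"
  unfolding zz_def by simp

lemma lm_add: "lm g \<Longrightarrow> lm h \<Longrightarrow> lm (\<lambda>x. g x + h x)"
proof -
  assume g: "lm g" and h: "lm h"
  have "\<exists>l. ((\<lambda>x. (dd^^m) g x + (dd^^m) h x) \<longlongrightarrow> l) at_bot" for m
  proof -
    obtain a b where "((dd^^m) g \<longlongrightarrow> a) at_bot" "((dd^^m) h \<longlongrightarrow> b) at_bot" using g h unfolding lm_def by blast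
    then have "((\<lambda>x. (dd^^m) g x + (dd^^m) h x) \<longlongrightarrow> a + b) at_bot" by (rule tendsto_add)
    then show ?thesis by blast
  qed
  then show ?thesis using g h unfolding lm_def by (auto simp: ddn_add_sm sm_add)
qed

lemma z0_add: "z0 g \<Longrightarrow> z0 h \<Longrightarrow> z0 (\<lambda>x. g x + h x)"
  unfolding z0_def by (auto simp: ddn_add_sm sm_add) (metis (no_types) add_0 tendsto_add)

lemma lm_mult_aux: "\<forall>g h. lm g \<longrightarrow> lm h \<longrightarrow> (\<exists>l. ((dd^^m) (\<lambda>x. g x * h x) \<longlongrightarrow> l) at_bot)"
proof (induction m)
  case 0 then show ?case by (auto dest!: lm_lim intro: tendsto_mult)
next
  case (Suc m)
  show ?case
  proof (intro allI impI)
    fix g h assume g: "lm g" and h: "lm h"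
    have e: "(dd^^Suc m) (\<lambda>x. g x * h x) = (\<lambda>x. (dd^^m) (\<lambda>x. g x * dd h x) x + (dd^^m) (\<lambda>x. dd g x * h x) x)"
      using g h by (simp del: funpow.simps add: ddn_Suc dd_mult sm_dif lm_sm ddn_add_sm sm_mult sm_dd)
    obtain l1 where "((dd^^m) (\<lambda>x. g x * dd h x) \<longlongrightarrow> l1) at_bot" using Suc.IH g h lm_dd by blast
    moreover obtain l2 where "((dd^^m) (\<lambda>x. dd g x * h x) \<longlongrightarrow> l2) at_bot" using Suc.IH g h lm_dd by blast
    ultimately show "\<exists>l. ((dd^^Suc m) (\<lambda>x. g x * h x) \<longlongrightarrow> l) at_bot"
      unfolding e by (blast intro: tendsto_add)
  qed
qed

lemma lm_mult: "lm g \<Longrightarrow> lm h \<Longrightarrow> lm (\<lambda>x. g x * h x)"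
  using lm_mult_aux unfolding lm_def[of "\<lambda>x. g x * h x"] by (auto intro: sm_mult lm_sm)

lemma z0_mult_aux: "\<forall>g h. lm g \<longrightarrow> z0 h \<longrightarrow> (((dd^^m) (\<lambda>x. g x * h x)) \<longlongrightarrow> 0) at_bot"
proof (induction m)
  case 0 then show ?case by (auto dest!: lm_lim z0_lim) (metis (no_types) mult_zero_right tendsto_mult)
next
  case (Suc m)
  show ?case
  proof (intro allI impI)
    fix g h assume g: "lm g" and h: "z0 h"
    have e: "(dd^^Suc m) (\<lambda>x. g x * h x) = (\<lambda>x. (dd^^m) (\<lambda>x. g x * dd h x) x + (dd^^m) (\<lambda>x. dd g x * h x) x)"
      using g h by (simp del: funpow.simps add: ddn_Suc dd_mult sm_dif lm_sm z0_sm ddn_add_sm sm_mult sm_dd)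
    have "((dd^^m) (\<lambda>x. g x * dd h x) \<longlongrightarrow> 0) at_bot" using Suc.IH g h z0_dd by blast
    moreover have "((dd^^m) (\<lambda>x. dd g x * h x) \<longlongrightarrow> 0) at_bot" using Suc.IH g h lm_dd by blast
    ultimately show "((dd^^Suc m) (\<lambda>x. g x * h x) \<longlongrightarrow> 0) at_bot"
      unfolding e using tendsto_add[where a=0 and b=0] by simp
  qed
qed

lemma z0_mult: "lm g \<Longrightarrow> z0 h \<Longrightarrow> z0 (\<lambda>x. g x * h x)"
  using z0_mult_aux unfolding z0_def[of "\<lambda>x. g x * h x"] by (auto intro: sm_mult lm_sm z0_sm)

lemma z0_mult': "z0 g \<Longrightarrow> lm h \<Longrightarrow> z0 (\<lambda>x. g x * h x)"
  using z0_mult[of h g] by (simp add: mult.commute)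

lemma lm_cmult: "lm h \<Longrightarrow> lm (\<lambda>x. c * h x)" by (rule lm_mult) auto
lemma z0_cmult: "z0 h \<Longrightarrow> z0 (\<lambda>x. c * h x)" by (rule z0_mult) auto
lemma lm_minus: "lm h \<Longrightarrow> lm (\<lambda>x. - h x)" using lm_cmult[of h "-1"] by simp
lemma z0_minus: "z0 h \<Longrightarrow> z0 (\<lambda>x. - h x)" using z0_cmult[of h "-1"] by simp
lemma lm_diff: "lm g \<Longrightarrow> lm h \<Longrightarrow> lm (\<lambda>x. g x - h x)" using lm_add[of g "\<lambda>x. - h x"] lm_minus by simp
lemma z0_diff: "z0 g \<Longrightarrow> z0 h \<Longrightarrow> z0 (\<lambda>x. g x - h x)" using z0_add[of g "\<lambda>x. - h x"] z0_minus by simp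

lemma zz_add: "zz g \<Longrightarrow> zz h \<Longrightarrow> zz (\<lambda>x. g x + h x)"
  unfolding zz_def by (auto simp: dd_add sm_dif lm_sm intro: lm_add z0_add)
lemma zz_mult: "zz g \<Longrightarrow> zz h \<Longrightarrow> zz (\<lambda>x. g x * h x)"
proof -
  assume g: "zz g" and h: "zz h"
  have "lm g" "lm h" "z0 (dd g)" "z0 (dd h)" using g h unfolding zz_def by auto
  moreover have "dif g" "dif h" using calculation by (auto intro: sm_dif lm_sm)
  ultimately show ?thesis unfolding zz_def
    by (simp add: dd_mult lm_mult z0_add z0_mult z0_mult')
qed
lemma zz_cmult: "zz h \<Longrightarrow> zz (\<lambda>x. c * h x)" by (rule zz_mult) auto
lemma zz_minus: "zz h \<Longrightarrow> zz (\<lambda>x. - h x)" using zz_cmult[of h "-1"] by simp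
lemma zz_diff: "zz g \<Longrightarrow> zz h \<Longrightarrow> zz (\<lambda>x. g x - h x)" using zz_add[of g "\<lambda>x. - h x"] zz_minus by simp

lemma lm_sum: "finite A \<Longrightarrow> (\<And>i. i \<in> A \<Longrightarrow> lm (h i)) \<Longrightarrow> lm (\<lambda>x. \<Sum>i\<in>A. h i x)"
  by (induction A rule: finite_induct) (auto intro: lm_add)
lemma z0_sum: "finite A \<Longrightarrow> (\<And>i. i \<in> A \<Longrightarrow> z0 (h i)) \<Longrightarrow> z0 (\<lambda>x. \<Sum>i\<in>A. h i x)"
  by (induction A rule: finite_induct) (auto intro: z0_add)
lemma zz_sum: "finite A \<Longrightarrow> (\<And>i. i \<in> A \<Longrightarrow> zz (h i)) \<Longrightarrow> zz (\<lambda>x. \<Sum>i\<in>A. h i x)"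
  by (induction A rule: finite_induct) (auto intro: zz_add)

definition ai :: "(real \<Rightarrow> complex) \<Rightarrow> bool" where
  "ai h \<longleftrightarrow> (\<forall>x. h absolutely_integrable_on {..x})"
definition II :: "(real \<Rightarrow> complex) \<Rightarrow> real \<Rightarrow> complex" where
  "II g = (\<lambda>x. integral {..x} g)"

lemma ai_add: "ai g \<Longrightarrow> ai h \<Longrightarrow> ai (\<lambda>x. g x + h x)"
  unfolding ai_def by auto
lemma ai_diff: "ai g \<Longrightarrow> ai h \<Longrightarrow> ai (\<lambda>x. g x - h x)"
  unfolding ai_def by auto
lemma ai_cmult: "ai h \<Longrightarrow> ai (\<lambda>x. c * h x)"
  unfolding ai_def by auto
lemma ai_0[simp]: "ai (\<lambda>x. 0)"
  unfolding ai_def by simp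

lemma I_split:
  assumes "ai g" "a \<le> x"
  shows "integral {..x} g = integral {..a} g + integral {a..x} g"
proof -
  have "g integrable_on {..a}" using assms unfolding ai_def
    using set_lebesgue_integral_eq_integral(1) by blast
  moreover have "g integrable_on {a..x}" using assms unfolding ai_def
    by (meson absolutely_integrable_on_subinterval atMost_iff atLeastAtMost_iff set_lebesgue_integral_eq_integral(1) subsetI)
  ultimately have "(g has_integral (integral {..a} g + integral {a..x} g)) ({..a} \<union> {a..x})"
  proof (intro has_integral_Un)
    have "{..a} \<inter> {a..x} = {a}" using assms by auto
    then show "negligible ({..a} \<inter> {a..x})" by simp
  qed auto
  moreover have "{..a} \<union> {a..x} = {..x}" using assms by auto
  ultimately show ?thesis by (metis integral_unique)
qed

lemma II_hvd:
  assumes "ai g" "continuous_on UNIV g"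
  shows "(II g has_vector_derivative g x) (at x)"
proof -
  define a b where "a = x - 1" and "b = x + 1"
  have "((\<lambda>u. integral {a..u} g) has_vector_derivative g x) (at x within {a..b})"
    by (rule integral_has_vector_derivative) (auto simp: a_def b_def intro: continuous_on_subset[OF assms(2)])
  moreover have "at x within {a..b} = at x"
    by (rule at_within_interior) (auto simp: a_def b_def)
  ultimately have "((\<lambda>u. integral {a..u} g) has_vector_derivative g x) (at x)" by simp
  then have "((\<lambda>u. integral {..a} g + integral {a..u} g) has_vector_derivative g x) (at x)"
    using has_vector_derivative_add[OF has_vector_derivative_const] by fastforce
  then show ?thesis unfolding II_def
    by (rule has_vector_derivative_transform_within_open[where S="{a<..<b}"])
       (auto simp: a_def b_def I_split[OF assms(1), symmetric])
qed

lemma II_dif: "ai g \<Longrightarrow> dif g \<Longrightarrow> dif (II g)"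
  and dd_II: "ai g \<Longrightarrow> dif g \<Longrightarrow> dd (II g) = g"
  using hvd_both[of "II g" g] II_hvd dif_cont by blast+

lemma II_lim:
  assumes "ai g"
  shows "(II g \<longlongrightarrow> 0) at_bot"
proof -
  have int: "set_integrable lebesgue {..0::real} g" using assms unfolding ai_def by blast
  have "((\<lambda>a. set_lebesgue_integral lebesgue {a..0} g) \<longlongrightarrow> set_lebesgue_integral lebesgue {..0} g) at_bot"
    by (rule tendsto_set_lebesgue_integral_at_bot) (use int in auto)
  then have "((\<lambda>a. integral {..0} g - set_lebesgue_integral lebesgue {a..0} g) \<longlongrightarrow>
       integral {..0} g - set_lebesgue_integral lebesgue {..0} g) at_bot"
    by (intro tendsto_diff tendsto_const)
  then have t: "((\<lambda>a. integral {..0} g - set_lebesgue_integral lebesgue {a..0} g) \<longlongrightarrow> 0) at_bot"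
    using set_lebesgue_integral_eq_integral(2)[OF int] by simp
  have "eventually (\<lambda>a. integral {..0} g - set_lebesgue_integral lebesgue {a..0} g = II g a) at_bot"
    unfolding eventually_at_bot_linorder
  proof (intro exI[of _ 0] allI impI)
    fix a :: real assume "a \<le> 0"
    have "set_integrable lebesgue {a..0} g" using int
      by (rule set_integrable_subset) auto
    then show "integral {..0} g - set_lebesgue_integral lebesgue {a..0} g = II g a"
      using I_split[OF assms \<open>a \<le> 0\<close>] set_lebesgue_integral_eq_integral(2)[where f=g and S="{a..0}"] unfolding II_def by simp
  qed
  then show ?thesis using t by (rule Lim_transform_eventually[rotated])
qed

lemma deriv0_const:
  assumes "dif r" "dd r = (\<lambda>x. 0)"
  shows "\<exists>c. r = (\<lambda>x. c)"
proof -
  have "\<And>x. (r has_vector_derivative 0) (at x within UNIV)"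
    using dif_hvd[OF assms(1)] assms(2) by simp
  then obtain c where "\<And>x. r x = c"
    using has_vector_derivative_zero_constant[of UNIV r] by auto
  then show ?thesis by blast
qed

lemma eq_by_deriv:
  assumes "dif p" "dif q" "dd p = dd q" "(p \<longlongrightarrow> l) at_bot" "(q \<longlongrightarrow> l) at_bot"
  shows "p = q"
proof -
  have "dd (\<lambda>x. p x - q x) = (\<lambda>x. 0)" using assms by (simp add: dd_diff)
  moreover have "dif (\<lambda>x. p x - q x)" using assms(1,2) by (rule dif_diff)
  ultimately obtain c where c: "(\<lambda>x. p x - q x) = (\<lambda>x. c)" using deriv0_const by blast
  have "((\<lambda>x. p x - q x) \<longlongrightarrow> l - l) at_bot" using assms(4,5) by (rule tendsto_diff)
  then have "((\<lambda>x::real. c) \<longlongrightarrow> 0) at_bot" using c by simp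
  then have "c = 0" by (rule tendsto_const_iff[OF trivial_limit_at_bot_linorder, THEN iffD1])
  show ?thesis
  proof
    fix x show "p x = q x" using fun_cong[OF c, of x] \<open>c = 0\<close> by simp
  qed
qed

lemma lim_by_ai:
  assumes "dif h" "dif (dd h)" "ai (dd h)"
  shows "\<exists>l. (h \<longlongrightarrow> l) at_bot"
proof -
  have d2: "dif (II (dd h))" using II_dif assms(2,3) by blast
  have "dd (\<lambda>x. h x - II (dd h) x) = (\<lambda>x. 0)"
    using assms d2 by (simp add: dd_diff dd_II)
  moreover have "dif (\<lambda>x. h x - II (dd h) x)" using assms(1) d2 by (rule dif_diff)
  ultimately obtain c where c: "(\<lambda>x. h x - II (dd h) x) = (\<lambda>x. c)"
    using deriv0_const by blast
  have "((\<lambda>x. II (dd h) x + c) \<longlongrightarrow> 0 + c) at_bot"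
    using II_lim[OF assms(3)] by (intro tendsto_add tendsto_const)
  moreover have "(\<lambda>x. II (dd h) x + c) = h"
  proof
    fix x show "II (dd h) x + c = h x" using fun_cong[OF c, of x] by (metis diff_eq_eq add.commute)
  qed
  ultimately show ?thesis by auto
qed

lemma bounded_left:
  fixes b :: "real \<Rightarrow> complex"
  assumes "continuous_on UNIV b" "(b \<longlongrightarrow> l) at_bot"
  shows "bounded (b ` {..x})"
proof -
  have "eventually (\<lambda>y. dist (b y) l < 1) at_bot"
    using assms(2) unfolding tendsto_iff by simp
  then obtain a where a: "\<And>y. y \<le> a \<Longrightarrow> dist (b y) l < 1"
    unfolding eventually_at_bot_linorder by blast
  define a' where "a' = min a x"
  have "bounded (b ` {..a'})"
    unfolding bounded_iff
  proof (intro exI ballI)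
    fix z assume "z \<in> b ` {..a'}"
    then obtain y where y: "y \<le> a" "z = b y" by (auto simp: a'_def)
    have "norm (b y) \<le> norm l + norm (b y - l)" by (rule norm_triangle_sub)
    moreover have "norm (b y - l) < 1" using a[OF y(1)] by (simp add: dist_norm)
    ultimately show "norm z \<le> norm l + 1" using y by simp
  qed
  moreover have "bounded (b ` {a'..x})"
    by (intro compact_imp_bounded compact_continuous_image continuous_on_subset[OF assms(1)]) auto
  ultimately have "bounded (b ` {..a'} \<union> b ` {a'..x})" by simp
  moreover have "b ` {..x} \<subseteq> b ` {..a'} \<union> b ` {a'..x}"
  proof
    fix z assume "z \<in> b ` {..x}"
    then obtain y where y: "y \<le> x" "z = b y" by auto
    show "z \<in> b ` {..a'} \<union> b ` {a'..x}"
    proof (cases "y \<le> a'")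
      case True then show ?thesis using y by auto
    next
      case False then show ?thesis using y by auto
    qed
  qed
  ultimately show ?thesis using bounded_subset by blast
qed

lemma ai_mult:
  fixes b :: "real \<Rightarrow> complex"
  assumes "ai h" "continuous_on UNIV h" "continuous_on UNIV b" "(b \<longlongrightarrow> l) at_bot"
  shows "ai (\<lambda>x. h x * b x)"
  unfolding ai_def
proof
  fix x
  have "(\<lambda>y. b y * h y) absolutely_integrable_on {..x}"
  proof (rule absolutely_integrable_bounded_measurable_product[OF bilinear_times])
    show "b \<in> borel_measurable (lebesgue_on {..x})"
      by (rule continuous_imp_measurable_on_sets_lebesgue[OF continuous_on_subset[OF assms(3)]]) auto
    show "{..x} \<in> sets lebesgue" by simp
    show "bounded (b ` {..x})" using bounded_left assms(3,4) by blast
    show "h absolutely_integrable_on {..x}" using assms(1) unfolding ai_def by blast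
  qed
  then show "(\<lambda>y. h y * b y) absolutely_integrable_on {..x}" by (simp add: mult.commute)
qed

lemma ai_mult_lm: "ai h \<Longrightarrow> dif h \<Longrightarrow> lm b \<Longrightarrow> ai (\<lambda>x. h x * b x)"
  using ai_mult dif_cont lm_lim lm_sm sm_dif by metis

lemma z0_II: "ai g \<Longrightarrow> z0 g \<Longrightarrow> z0 (II g)"
proof -
  assume a: "ai g" and z: "z0 g"
  have d: "dif g" using z z0_sm sm_dif by blast
  have e: "dd (II g) = g" using dd_II a d by blast
  have "sm (II g)" unfolding sm_def
  proof
    fix m show "dif ((dd^^m) (II g))"
      using II_dif[OF a d] z z0_sm by (cases m) (auto simp: e sm_def simp del: funpow.simps simp add: ddn_Suc)
  qed
  moreover have "((dd^^m) (II g) \<longlongrightarrow> 0) at_bot" for m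
    using II_lim[OF a] z unfolding z0_def by (cases m) (auto simp: e simp del: funpow.simps simp add: ddn_Suc)
  ultimately show ?thesis unfolding z0_def by blast
qed

definition sl :: "fn \<Rightarrow> real \<Rightarrow> real \<Rightarrow> complex" where
  "sl g t = (\<lambda>y. g y t)"

lemma sl_px: "sl (px g) t = dd (sl g t)"
  unfolding sl_def px_def dd_def by simp

lemma sl_pinv: "sl (pinv g) t = II (sl g t)"
  unfolding sl_def pinv_def II_def by simp

lemma px_sl: "px g x t = dd (sl g t) x"
  by (metis sl_px sl_def)

lemma pinv_sl: "pinv g x t = II (sl g t) x"
  by (metis sl_pinv sl_def)

definition Lop1 :: "(real \<Rightarrow> complex) \<Rightarrow> (real \<Rightarrow> complex) \<Rightarrow> real \<Rightarrow> complex" where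
  "Lop1 v b = (\<lambda>x. - (1/4) * dd (dd b) x - v x * b x + (1/2) * II (\<lambda>y. dd v y * b y) x)"

fun B1 :: "(real \<Rightarrow> complex) \<Rightarrow> nat \<Rightarrow> real \<Rightarrow> complex" where
  "B1 v 0 = (\<lambda>x. 0)"
| "B1 v (Suc 0) = (\<lambda>x. 1)"
| "B1 v (Suc (Suc k)) = Lop1 v (B1 v (Suc k))"

lemma sl_Lop: "sl (Lop u b) t = Lop1 (sl u t) (sl b t)"
proof -
  have "pinv (\<lambda>y s. px u y s * b y s) x t = II (\<lambda>y. dd (sl u t) y * sl b t y) x" for x
    unfolding pinv_def II_def by (simp add: px_sl sl_def)
  then show ?thesis unfolding Lop_def Lop1_def
    by (simp add: px_sl sl_px) (simp add: sl_def)
qed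

lemma sl_bseq: "sl (bseq u k) t = B1 (sl u t) k"
  by (induction u k rule: bseq.induct) (auto simp: sl_Lop, simp_all add: sl_def)

lemma bseq_sl: "bseq u k x t = B1 (sl u t) k x"
  by (metis sl_bseq sl_def)

definition dec1 :: "(real \<Rightarrow> complex) \<Rightarrow> bool" where
  "dec1 v \<longleftrightarrow> z0 v \<and> (\<forall>m. ai ((dd^^m) v))"

lemma dec1_z0: "dec1 v \<Longrightarrow> z0 v" and dec1_ai: "dec1 v \<Longrightarrow> ai ((dd^^m) v)"
  unfolding dec1_def by auto

lemma dec1_ai0: "dec1 v \<Longrightarrow> ai v" and dec1_ai1: "dec1 v \<Longrightarrow> ai (dd v)"
  using dec1_ai[of v 0] dec1_ai[of v 1] by auto

lemma dec1_dd: "dec1 v \<Longrightarrow> dec1 (dd v)"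
  unfolding dec1_def using z0_dd by (metis ddn_Suc)

lemma pd_True: "pd (replicate m True) g = (\<lambda>x t. (dd^^m) (sl g t) x)"
proof (induction m)
  case 0 then show ?case by (simp add: sl_def)
next
  case (Suc m)
  have "pd (replicate (Suc m) True) g = px (pd (replicate m True) g)" by simp
  also have "\<dots> = (\<lambda>x t. dd ((dd^^m) (sl g t)) x)"
    unfolding Suc px_def dd_def by simp
  finally show ?case by simp
qed

lemma smooth_slice_dif:
  assumes "smooth g"
  shows "dif ((dd^^m) (sl g t))"
  unfolding dif_def
proof
  fix x
  have d: "(\<lambda>p. pd (replicate m True) g (fst p) (snd p)) differentiable (at (x, t))"
    using assms unfolding smooth_def by blast
  have "(\<lambda>y. (y, t)) differentiable (at x)"
    by (intro differentiable_Pair differentiable_ident differentiable_const)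
  then have "((\<lambda>p. pd (replicate m True) g (fst p) (snd p)) \<circ> (\<lambda>y. (y, t))) differentiable (at x)"
    using d by (intro differentiable_chain_at) auto
  then show "(dd^^m) (sl g t) differentiable at x"
    by (simp add: pd_True o_def)
qed

lemma decaying_dec1:
  assumes "decaying g"
  shows "dec1 (sl g t)"
proof -
  have sm: "sm (sl g t)" unfolding sm_def using assms smooth_slice_dif decaying_def by blast
  have "((dd^^m) (sl g t) \<longlongrightarrow> 0) at_bot" for m
    using assms unfolding decaying_def pd_True[symmetric]
    by (metis (no_types, lifting) ext pd_True)
  moreover have "ai ((dd^^m) (sl g t))" for m
    using assms unfolding decaying_def ai_def
    by (metis (no_types, lifting) ext pd_True)
  ultimately show ?thesis using sm unfolding dec1_def z0_def by blast
qed

definition Mop :: "(real \<Rightarrow> complex) \<Rightarrow> (real \<Rightarrow> complex) \<Rightarrow> real \<Rightarrow> complex" where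
  "Mop v g = (\<lambda>x. (1/4) * dd (dd (dd g)) x + v x * dd g x + (1/2) * dd v x * g x)"

lemma zz_facts:
  assumes "zz b"
  shows "lm b" "sm b" "dif b" "z0 (dd b)" "z0 (dd (dd b))" "dif (dd b)" "dif (dd (dd b))" "dif (dd (dd (dd b)))"
  using assms zz_dd zz_lm lm_sm z0_dd z0_sm sm_dif sm_dd by blast+

lemma dec1_facts:
  assumes "dec1 v"
  shows "z0 v" "z0 (dd v)" "lm v" "lm (dd v)" "sm v" "dif v" "dif (dd v)" "ai v" "ai (dd v)"
  using assms dec1_z0 z0_dd z0_lm z0_sm sm_dif sm_dd dec1_ai0 dec1_ai1 by blast+

lemma Lop1_z0:
  assumes v: "dec1 v" and b: "zz b"
  shows "z0 (Lop1 v b)"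
proof -
  note V = dec1_facts[OF v] and B = zz_facts[OF b]
  have i1: "ai (\<lambda>y. dd v y * b y)" using ai_mult_lm V B by blast
  have i2: "z0 (\<lambda>y. dd v y * b y)" using z0_mult' V B by blast
  have "z0 (II (\<lambda>y. dd v y * b y))" using z0_II i1 i2 by blast
  moreover have "z0 (\<lambda>x. v x * b x)" using z0_mult' V B by blast
  ultimately show ?thesis unfolding Lop1_def
    using B by (intro z0_add z0_diff z0_cmult) auto
qed

lemma Lop1_dd:
  assumes v: "dec1 v" and b: "zz b"
  shows "dd (Lop1 v b) = (\<lambda>x. - Mop v b x)"
proof -
  note V = dec1_facts[OF v] and B = zz_facts[OF b]
  have i1: "ai (\<lambda>y. dd v y * b y)" using ai_mult_lm V B by blast
  have d1: "dif (\<lambda>y. dd v y * b y)" using V B by (intro dif_mult)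
  have e: "dd (II (\<lambda>y. dd v y * b y)) = (\<lambda>y. dd v y * b y)" using dd_II i1 d1 by blast
  have dI: "dif (II (\<lambda>y. dd v y * b y))" using II_dif i1 d1 by blast
  have dvb: "dif (\<lambda>x. v x * b x)" using V B by (intro dif_mult)
  have "dd (Lop1 v b) = (\<lambda>x. - (1/4) * dd (dd (dd b)) x - (v x * dd b x + dd v x * b x) + (1/2) * (dd v x * b x))"
    unfolding Lop1_def
    using B V dI dvb
    by (simp only: dd_add dd_diff dd_cmult dd_mult dif_add dif_diff dif_cmult dif_mult e)
  then show ?thesis unfolding Mop_def by (simp add: algebra_simps)
qed

lemma B1_zz:
  assumes v: "dec1 v"
  shows "zz (B1 v (Suc k)) \<and> z0 (B1 v (Suc (Suc k)))"
proof (induction k)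
  case 0 then show ?case using Lop1_z0[OF v, of "\<lambda>x. 1"] by simp
next
  case (Suc k)
  then have "zz (B1 v (Suc (Suc k)))" using z0_zz by blast
  then show ?case using Lop1_z0[OF v] by simp
qed

lemma B1_zz': "dec1 v \<Longrightarrow> zz (B1 v k)"
  using B1_zz by (cases k) auto

lemma B1_z0: "dec1 v \<Longrightarrow> 2 \<le> k \<Longrightarrow> z0 (B1 v k)"
proof -
  assume "dec1 v" "2 \<le> k"
  moreover obtain j where "k = Suc (Suc j)" using \<open>2 \<le> k\<close> by (metis add_2_eq_Suc le_Suc_ex)
  ultimately show ?thesis using B1_zz by blast
qed

lemma Mop_0: "Mop v (\<lambda>x. 0) = (\<lambda>x. 0)"
  unfolding Mop_def by simp

lemma B1_dd: "dec1 v \<Longrightarrow> dd (B1 v (Suc k)) = (\<lambda>x. - Mop v (B1 v k) x)"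
proof (cases k)
  case 0 then show ?thesis by (simp add: Mop_0)
next
  case (Suc j)
  assume "dec1 v"
  then show ?thesis using Suc Lop1_dd B1_zz' by simp
qed

definition Dop :: "(real \<Rightarrow> complex) \<Rightarrow> (real \<Rightarrow> complex) \<Rightarrow> real \<Rightarrow> complex" where
  "Dop s g = (\<lambda>x. (1/2) * dd (dd g) x - dd s x * g x - s x * dd g x)"

lemmas ddrules = dd_add dd_diff dd_cmult dd_mult dd_minus dd_const dif_add dif_diff dif_cmult dif_mult dif_minus dif_const sm_dif sm_dd

lemma darboux_core:
  fixes s F G H v w :: "real \<Rightarrow> complex" and xi :: complex
  assumes sm: "sm s" "sm F" "sm G" "sm H"
    and v: "v = (\<lambda>x. - xi - s x * s x - dd s x)"
    and w: "w = (\<lambda>x. - xi - s x * s x + dd s x)"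
    and G': "dd G = (\<lambda>x. - Mop v F x)" and H': "dd H = (\<lambda>x. - Mop v G x)"
  shows "dd (\<lambda>x. H x - xi * G x + Dop s G x) = (\<lambda>x. - Mop w (\<lambda>x. G x - xi * F x + Dop s F x) x)"
proof -
  note G'' = G'[unfolded Mop_def v]
  note H'' = H'[unfolded Mop_def v]
  show ?thesis
    unfolding Dop_def Mop_def w
    apply (simp only: ddrules sm G'' H'')
    apply (rule ext)
    apply (simp add: algebra_simps)
    apply (simp add: field_simps)
    done
qed

fun E :: "(real \<Rightarrow> complex) \<Rightarrow> complex \<Rightarrow> nat \<Rightarrow> real \<Rightarrow> complex" where
  "E v xi 0 = (\<lambda>x. 0)"
| "E v xi (Suc k) = (\<lambda>x. B1 v k x + xi * E v xi k x)"

lemma Mop_lin: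
  assumes "sm g" "sm h" "sm v"
  shows "Mop v (\<lambda>x. g x + c * h x) = (\<lambda>x. Mop v g x + c * Mop v h x)"
  unfolding Mop_def using assms
  apply (simp only: ddrules)
  apply (rule ext)
  apply (simp add: algebra_simps)
  done

lemma E_zz: "dec1 v \<Longrightarrow> zz (E v xi k)"
  by (induction k) (auto intro!: zz_add zz_cmult B1_zz')

lemma E_dd:
  assumes v: "dec1 v"
  shows "dd (E v xi (Suc k)) = (\<lambda>x. - Mop v (E v xi k) x)"
proof (induction k)
  case 0 then show ?case by (simp add: Mop_0)
next
  case (Suc j)
  have smB: "sm (B1 v (Suc j))" "sm (B1 v j)" using B1_zz'[OF v] zz_sm by blast+
  have smE: "sm (E v xi (Suc j))" "sm (E v xi j)" using E_zz[OF v] zz_sm by blast+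
  have sv: "sm v" using v dec1_z0 z0_sm by blast
  have "dd (E v xi (Suc (Suc j))) = (\<lambda>x. dd (B1 v (Suc j)) x + xi * dd (E v xi (Suc j)) x)"
    using smB smE by (simp add: dd_add dd_cmult dif_cmult sm_dif)
  also have "\<dots> = (\<lambda>x. - (Mop v (B1 v j) x + xi * Mop v (E v xi j) x))"
    using Suc B1_dd[OF v] by (simp add: algebra_simps)
  also have "\<dots> = (\<lambda>x. - Mop v (E v xi (Suc j)) x)"
    using Mop_lin[OF smB(2) smE(2) sv, of xi] by (simp add: fun_eq_iff)
  finally show ?case .
qed

lemma zz_intro: "sm s \<Longrightarrow> (s \<longlongrightarrow> l) at_bot \<Longrightarrow> z0 (dd s) \<Longrightarrow> zz s"
  unfolding zz_def lm_def z0_def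
  by (metis ddn_Suc old.nat.exhaust funpow_0)

lemma z0_Dop: "zz s \<Longrightarrow> zz g \<Longrightarrow> z0 (Dop s g)"
proof -
  assume s: "zz s" and g: "zz g"
  note S = zz_facts[OF s] and Gf = zz_facts[OF g]
  have "z0 (\<lambda>x. dd s x * g x)" using z0_mult' S Gf by blast
  moreover have "z0 (\<lambda>x. s x * dd g x)" using z0_mult S Gf by blast
  ultimately show ?thesis unfolding Dop_def using Gf by (intro z0_diff z0_cmult) auto
qed

locale dctx =
  fixes v w s :: "real \<Rightarrow> complex" and xi :: complex
  assumes dv: "dec1 v" and dw: "dec1 w" and zs: "zz s"
    and v_eq: "v = (\<lambda>x. - xi - s x * s x - dd s x)"
    and w_eq: "w = (\<lambda>x. - xi - s x * s x + dd s x)"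
begin

definition cc :: "nat \<Rightarrow> real \<Rightarrow> complex" where
  "cc k = (\<lambda>x. B1 v k x + Dop s (E v xi k) x)"

lemma cc_alt: "cc k = (\<lambda>x. E v xi (Suc k) x - xi * E v xi k x + Dop s (E v xi k) x)"
  unfolding cc_def by simp

lemma cc_zz: "zz (cc k)"
  unfolding cc_def using B1_zz'[OF dv] z0_Dop[OF zs E_zz[OF dv]] z0_zz by (blast intro: zz_add)

lemma cc_lim: "2 \<le> k \<Longrightarrow> (cc k \<longlongrightarrow> 0) at_bot"
proof -
  assume k: "2 \<le> k"
  have "z0 (cc k)" unfolding cc_def using B1_z0[OF dv k] z0_Dop[OF zs E_zz[OF dv]] by (blast intro: z0_add)
  then show ?thesis by (rule z0_lim)
qed

lemma cc_dd: "dd (cc (Suc k)) = (\<lambda>x. - Mop w (cc k) x)"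
  unfolding cc_alt
  apply (rule darboux_core)
  using E_zz[OF dv] zz_sm zs v_eq w_eq E_dd[OF dv] by blast+

lemma B1_w_cc: "B1 w k = cc k"
proof (induction k rule: nat_less_induct)
  case (1 n)
  show ?case
  proof (cases n)
    case 0 then show ?thesis unfolding cc_def Dop_def by simp
  next
    case (Suc m)
    show ?thesis
    proof (cases m)
      case 0
      have "E v xi (Suc 0) = (\<lambda>x. 0)" by simp
      then show ?thesis unfolding cc_def Dop_def using Suc 0 by simp
    next
      case (Suc j)
      have IH: "B1 w (Suc j) = cc (Suc j)" using "1.IH" \<open>n = Suc m\<close> Suc by simp
      have "B1 w n = Lop1 w (cc (Suc j))" using \<open>n = Suc m\<close> Suc IH by simp
      also have "\<dots> = cc (Suc (Suc j))"
      proof (rule eq_by_deriv)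
        show "dif (Lop1 w (cc (Suc j)))" using Lop1_z0[OF dw cc_zz] z0_sm sm_dif by blast
        show "dif (cc (Suc (Suc j)))" using cc_zz zz_sm sm_dif by blast
        show "dd (Lop1 w (cc (Suc j))) = dd (cc (Suc (Suc j)))"
          using Lop1_dd[OF dw cc_zz] cc_dd by simp
        show "(Lop1 w (cc (Suc j)) \<longlongrightarrow> 0) at_bot" using Lop1_z0[OF dw cc_zz] z0_lim by blast
        show "(cc (Suc (Suc j)) \<longlongrightarrow> 0) at_bot" using cc_lim by simp
      qed
      finally show ?thesis using \<open>n = Suc m\<close> Suc by simp
    qed
  qed
qed

end

definition jd :: "fn \<Rightarrow> bool" where
  "jd g \<longleftrightarrow> (\<forall>x t. (\<lambda>p. g (fst p) (snd p)) differentiable (at (x, t)))"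

lemma smooth_jd: "smooth g \<Longrightarrow> jd (pd ds g)"
  unfolding smooth_def jd_def by blast

lemma smooth_px: "smooth g \<Longrightarrow> smooth (px g)"
proof -
  have "pd ds (px g) = pd (ds @ [True]) g" for ds
    apply (induction ds) apply simp subgoal for a ds by (cases a) auto done
  then show "smooth g \<Longrightarrow> smooth (px g)" unfolding smooth_def by metis
qed

lemma smooth_pt: "smooth g \<Longrightarrow> smooth (pt g)"
proof -
  have "pd ds (pt g) = pd (ds @ [False]) g" for ds
    apply (induction ds) apply simp subgoal for a ds by (cases a) auto done
  then show "smooth g \<Longrightarrow> smooth (pt g)" unfolding smooth_def by metis
qed

lemma smooth_jd0: "smooth g \<Longrightarrow> jd g"
  using smooth_jd[of g "[]"] by simp

lemma jd_x: "jd g \<Longrightarrow> ((\<lambda>y. g y t) has_vector_derivative px g x t) (at x)"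
proof -
  assume "jd g"
  then have d: "(\<lambda>p. g (fst p) (snd p)) differentiable (at (x, t))" unfolding jd_def by blast
  have "(\<lambda>y. (y, t)) differentiable (at x)"
    by (intro differentiable_Pair differentiable_ident differentiable_const)
  then have "((\<lambda>p. g (fst p) (snd p)) \<circ> (\<lambda>y. (y, t))) differentiable (at x)"
    using d by (intro differentiable_chain_at) auto
  then show ?thesis unfolding px_def by (simp add: o_def vector_derivative_works[symmetric])
qed

lemma jd_t: "jd g \<Longrightarrow> ((\<lambda>s. g x s) has_vector_derivative pt g x t) (at t)"
proof -
  assume "jd g"
  then have d: "(\<lambda>p. g (fst p) (snd p)) differentiable (at (x, t))" unfolding jd_def by blast
  have "(\<lambda>s. (x, s)) differentiable (at t)"
    by (intro differentiable_Pair differentiable_ident differentiable_const)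
  then have "((\<lambda>p. g (fst p) (snd p)) \<circ> (\<lambda>s. (x, s))) differentiable (at t)"
    using d by (intro differentiable_chain_at) auto
  then show ?thesis unfolding pt_def by (simp add: o_def vector_derivative_works[symmetric])
qed

lemma jd_cont: "jd g \<Longrightarrow> continuous_on UNIV (\<lambda>p. g (fst p) (snd p))"
  unfolding jd_def
  by (metis continuous_at_imp_continuous_on differentiable_imp_continuous_within prod.collapse)

lemma jd_cont2: "jd g \<Longrightarrow> continuous_on S (\<lambda>(s, y). g y s)"
proof -
  assume "jd g"
  then have c: "continuous_on UNIV (\<lambda>p. g (fst p) (snd p))" by (rule jd_cont)
  have "continuous_on UNIV (\<lambda>q. (\<lambda>p. g (fst p) (snd p)) ((\<lambda>q. (snd q, fst q)) q))"
    by (rule continuous_on_compose2[OF c]) (auto intro!: continuous_intros)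
  then have "continuous_on UNIV (\<lambda>(s, y). g y s)" by (simp add: case_prod_beta')
  then show ?thesis by (rule continuous_on_subset) simp
qed

lemma jd_cont_x: "jd g \<Longrightarrow> continuous_on S (\<lambda>y. g y t)"
proof -
  assume "jd g"
  then have c: "continuous_on UNIV (\<lambda>p. g (fst p) (snd p))" by (rule jd_cont)
  have "continuous_on UNIV (\<lambda>y. (\<lambda>p. g (fst p) (snd p)) ((\<lambda>y. (y, t)) y))"
    by (rule continuous_on_compose2[OF c]) (auto intro!: continuous_intros)
  then have "continuous_on UNIV (\<lambda>y. g y t)" by simp
  then show ?thesis by (rule continuous_on_subset) simp
qed

lemma schwarz:
  assumes "smooth g"
  shows "pt (px g) x t = px (pt g) x t"
proof -
  define h where "h = px g"
  define k where "k = pt h"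
  have jg: "jd g" using smooth_jd0[OF assms] .
  have jh: "jd h" unfolding h_def using smooth_jd0[OF smooth_px[OF assms]] .
  have jk: "jd k" unfolding k_def h_def using smooth_jd0[OF smooth_pt[OF smooth_px[OF assms]]] .
  have jgt: "jd (pt g)" using smooth_jd0[OF smooth_pt[OF assms]] .
  define x0 where "x0 = x - 1"
  have ftc: "g y s = g x0 s + integral {x0..y} (\<lambda>z. h z s)" if "x0 \<le> y" for y s
  proof -
    have "((\<lambda>z. h z s) has_integral g y s - g x0 s) {x0..y}"
      apply (rule fundamental_theorem_of_calculus[OF that])
      using jd_x[OF jg] unfolding h_def
      by (simp add: has_vector_derivative_at_within)
    then show ?thesis by (simp add: integral_unique)
  qed
  have leib: "((\<lambda>s. integral (cbox x0 y) (\<lambda>z. h z s)) has_vector_derivative integral (cbox x0 y) (\<lambda>z. k z s0)) (at s0 within UNIV)" for y s0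
  proof (rule leibniz_rule_vector_derivative[where fx="\<lambda>s z. k z s"])
    show "((\<lambda>s. h z s) has_vector_derivative k z s) (at s within UNIV)" for z s
      using jd_t[OF jh] unfolding k_def by simp
    show "(\<lambda>z. h z s) integrable_on cbox x0 y" for s
      by (rule integrable_continuous) (rule jd_cont_x[OF jh])
    show "continuous_on (UNIV \<times> cbox x0 y) (\<lambda>(s, z). k z s)"
      by (rule jd_cont2[OF jk])
  qed auto
  have pt_eq: "pt g y s = pt g x0 s + integral {x0..y} (\<lambda>z. k z s)" if "x0 \<le> y" for y s
  proof -
    have "((\<lambda>s. g x0 s + integral {x0..y} (\<lambda>z. h z s)) has_vector_derivative
           pt g x0 s + integral {x0..y} (\<lambda>z. k z s)) (at s)"
      using has_vector_derivative_add[OF jd_t[OF jg] leib[of y s, unfolded cbox_interval]] by simp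
    then have "((\<lambda>s. g y s) has_vector_derivative pt g x0 s + integral {x0..y} (\<lambda>z. k z s)) (at s)"
      using ftc[OF that] by simp
    then show ?thesis unfolding pt_def by (rule vector_derivative_at)
  qed
  have "((\<lambda>y. integral {x0..y} (\<lambda>z. k z t)) has_vector_derivative k x t) (at x within {x0..x+1})"
    by (rule integral_has_vector_derivative) (auto simp: x0_def intro: jd_cont_x[OF jk])
  moreover have "at x within {x0..x+1} = at x"
    by (rule at_within_interior) (auto simp: x0_def)
  ultimately have "((\<lambda>y. pt g x0 t + integral {x0..y} (\<lambda>z. k z t)) has_vector_derivative k x t) (at x)"
    using has_vector_derivative_add[OF has_vector_derivative_const, of "\<lambda>y. integral {x0..y} (\<lambda>z. k z t)" "k x t" "at x" "pt g x0 t"] by simp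
  then have "((\<lambda>y. pt g y t) has_vector_derivative k x t) (at x)"
  proof (rule has_vector_derivative_transform_within_open[where S="{x0<..}"])
    fix y assume "y \<in> {x0<..}"
    then have "x0 \<le> y" by simp
    from pt_eq[OF this, of t] show "pt g x0 t + integral {x0..y} (\<lambda>z. k z t) = pt g y t" by simp
  qed (auto simp: x0_def)
  then have "px (pt g) x t = k x t" unfolding px_def by (rule vector_derivative_at)
  then show ?thesis unfolding k_def h_def by simp
qed

lemma darboux_A:
  fixes s Gm Q psi v :: "real \<Rightarrow> complex" and lam xi :: complex
  assumes sm: "sm s" "sm Gm" "sm Q" "sm psi"
    and v: "v = (\<lambda>x. - xi - s x * s x - dd s x)"
    and psi2: "dd (dd psi) = (\<lambda>x. - (lam + v x) * psi x)"
    and Q1: "dd Q = (\<lambda>x. - (lam * dd Gm x + Mop v Gm x))"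
  shows "(\<lambda>x. dd (\<lambda>x. - (1/2) * dd (\<lambda>x. (lam - xi) * Gm x + Q x) x * psi x
                 + ((lam - xi) * Gm x + Q x) * dd psi x) x
           - dd (\<lambda>x. - (1/2) * dd Q x + s x * Q x) x * psi x
           - s x * (- (1/2) * dd (\<lambda>x. (lam - xi) * Gm x + Q x) x * psi x
                 + ((lam - xi) * Gm x + Q x) * dd psi x))
       = (\<lambda>x. - (1/2) * dd (\<lambda>x. (lam - xi) * Gm x + Q x + Dop s Gm x) x * (dd psi x - s x * psi x)
              + ((lam - xi) * Gm x + Q x + Dop s Gm x) * dd (\<lambda>x. dd psi x - s x * psi x) x)"
proof -
  note Q1' = Q1[unfolded Mop_def v]
  note psi2' = psi2[unfolded v]
  show ?thesis
    unfolding Dop_def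
    apply (simp only: ddrules sm Q1' psi2')
    apply (rule ext)
    apply (simp add: algebra_simps)
    apply (simp add: field_simps)
    done
qed

lemma hvd_inverse:
  fixes h :: "real \<Rightarrow> complex"
  assumes "(h has_vector_derivative h') (at x)" "h x \<noteq> 0"
  shows "((\<lambda>y. inverse (h y)) has_vector_derivative (- h' * (inverse (h x))\<^sup>2)) (at x)"
proof -
  have "(inverse has_field_derivative - (inverse (h x) ^ Suc (Suc 0))) (at (h x))"
    using DERIV_inverse[OF assms(2)] by simp
  from field_vector_diff_chain_at[OF assms(1) this]
  show ?thesis by (simp add: o_def power2_eq_square)
qed

lemma hvd_divide:
  fixes g h :: "real \<Rightarrow> complex"
  assumes "(g has_vector_derivative g') (at x)" "(h has_vector_derivative h') (at x)" "h x \<noteq> 0"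
  shows "((\<lambda>y. g y / h y) has_vector_derivative ((g' * h x - g x * h') / (h x)\<^sup>2)) (at x)"
proof -
  have "((\<lambda>y. g y * inverse (h y)) has_vector_derivative
          (g x * (- h' * (inverse (h x))\<^sup>2) + g' * inverse (h x))) (at x)"
    by (rule has_vector_derivative_mult[OF assms(1) hvd_inverse[OF assms(2,3)]])
  moreover have "g x * (- h' * (inverse (h x))\<^sup>2) + g' * inverse (h x) = (g' * h x - g x * h') / (h x)\<^sup>2"
    using assms(3) by (simp add: field_simps power2_eq_square)
  ultimately show ?thesis by (simp add: divide_inverse)
qed

lemma dd_divide:
  assumes "dif g" "dif h" "\<And>x. h x \<noteq> 0"
  shows "dd (\<lambda>x. g x / h x) = (\<lambda>x. (dd g x * h x - g x * dd h x) / (h x)\<^sup>2)"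
    and "dif (\<lambda>x. g x / h x)"
  using hvd_both[of "\<lambda>x. g x / h x", OF hvd_divide[OF dif_hvd[OF assms(1)] dif_hvd[OF assms(2)] assms(3)]]
  by auto

definition hs :: "(nat \<Rightarrow> real \<Rightarrow> complex) \<Rightarrow> complex \<Rightarrow> nat \<Rightarrow> real \<Rightarrow> complex" where
  "hs g l m = (\<lambda>x. \<Sum>i\<in>{0..m}. g i x * l ^ (m - i))"

lemma hs_0: "hs g l 0 = g 0"
  unfolding hs_def by simp

lemma hs_Suc: "hs g l (Suc m) = (\<lambda>x. l * hs g l m x + g (Suc m) x)"
proof
  fix x
  have "hs g l (Suc m) x = (\<Sum>i\<in>{0..m}. g i x * l ^ (Suc m - i)) + g (Suc m) x"
    unfolding hs_def by (simp add: sum.atLeast0_atMost_Suc)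
  also have "(\<Sum>i\<in>{0..m}. g i x * l ^ (Suc m - i)) = (\<Sum>i\<in>{0..m}. l * (g i x * l ^ (m - i)))"
    by (rule sum.cong) (auto simp: Suc_diff_le)
  also have "\<dots> = l * hs g l m x" unfolding hs_def by (simp add: sum_distrib_left)
  finally show "hs g l (Suc m) x = l * hs g l m x + g (Suc m) x" .
qed

lemma sm_hs: "(\<And>i. sm (g i)) \<Longrightarrow> sm (hs g l m)"
  unfolding hs_def by (intro sm_sum sm_mult) auto

lemma zz_hs: "(\<And>i. zz (g i)) \<Longrightarrow> zz (hs g l m)"
  unfolding hs_def by (intro zz_sum zz_mult) auto

lemma dd_hs: "(\<And>i. dif (g i)) \<Longrightarrow> dd (hs g l m) = hs (\<lambda>i. dd (g i)) l m"
  unfolding hs_def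
  by (subst dd_sum) (auto simp: dd_mult intro: dif_mult)

lemma Mop_lin2:
  assumes "sm g" "sm h" "sm v"
  shows "Mop v (\<lambda>x. c * g x + h x) = (\<lambda>x. c * Mop v g x + Mop v h x)"
  unfolding Mop_def using assms
  apply (simp only: ddrules)
  apply (rule ext)
  apply (simp add: algebra_simps)
  done

lemma Dop_lin2:
  assumes "sm g" "sm h" "sm s"
  shows "Dop s (\<lambda>x. c * g x + h x) = (\<lambda>x. c * Dop s g x + Dop s h x)"
  unfolding Dop_def using assms
  apply (simp only: ddrules)
  apply (rule ext)
  apply (simp add: algebra_simps)
  done

lemma Dop_0: "Dop s (\<lambda>x. 0) = (\<lambda>x. 0)"
  unfolding Dop_def by simp

context dctx
begin

lemma sv: "sm v" using dv dec1_z0 z0_sm by blast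
lemma ss: "sm s" using zs zz_sm by blast
lemma smE: "sm (E v xi k)" using E_zz[OF dv] zz_sm by blast
lemma smB: "sm (B1 v k)" using B1_zz'[OF dv] zz_sm by blast

lemma hsB_eq: "hs (B1 v) lam m = (\<lambda>x. (lam - xi) * hs (E v xi) lam m x + E v xi (Suc m) x)"
proof (induction m)
  case 0 then show ?case by (simp add: hs_0)
next
  case (Suc m)
  show ?case unfolding hs_Suc Suc by (simp add: algebra_simps)
qed

lemma hsE_dd: "dd (E v xi (Suc m)) = (\<lambda>x. - (lam * dd (hs (E v xi) lam m) x + Mop v (hs (E v xi) lam m) x))"
proof (induction m)
  case 0 then show ?case by (simp add: hs_0 Mop_0)
next
  case (Suc m)
  have smH: "sm (hs (E v xi) lam m)" using sm_hs smE by blast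
  have "dd (hs (E v xi) lam (Suc m)) = (\<lambda>x. lam * dd (hs (E v xi) lam m) x + dd (E v xi (Suc m)) x)"
    unfolding hs_Suc[of _ _ m] using smH smE by (simp only: dd_add dd_cmult dif_cmult sm_dif)
  moreover have "Mop v (hs (E v xi) lam (Suc m)) = (\<lambda>x. lam * Mop v (hs (E v xi) lam m) x + Mop v (E v xi (Suc m)) x)"
    unfolding hs_Suc using Mop_lin2[OF smH smE sv] .
  moreover note E_dd[OF dv, where xi=xi and k="Suc m"]
  ultimately show ?case using Suc by (simp del: E.simps add: algebra_simps)
qed

lemma hsB_xi: "hs (B1 v) xi m = E v xi (Suc m)"
proof (induction m)
  case 0 then show ?case by (simp add: hs_0)
next
  case (Suc m) then show ?case unfolding hs_Suc by (simp add: algebra_simps)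
qed

lemma hs_cc: "hs cc lam m = (\<lambda>x. hs (B1 v) lam m x + Dop s (hs (E v xi) lam m) x)"
proof (induction m)
  case 0 then show ?case by (simp add: hs_0 cc_def)
next
  case (Suc m)
  have smH: "sm (hs (E v xi) lam m)" using sm_hs smE by blast
  have "hs cc lam (Suc m) = (\<lambda>x. lam * hs cc lam m x + cc (Suc m) x)" by (rule hs_Suc)
  also have "\<dots> = (\<lambda>x. lam * (hs (B1 v) lam m x + Dop s (hs (E v xi) lam m) x) + (B1 v (Suc m) x + Dop s (E v xi (Suc m)) x))"
    unfolding Suc cc_def ..
  also have "\<dots> = (\<lambda>x. hs (B1 v) lam (Suc m) x + Dop s (hs (E v xi) lam (Suc m)) x)"
    unfolding hs_Suc[of _ _ m] Dop_lin2[OF smH smE ss] by (simp add: algebra_simps)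
  finally show ?case .
qed

end

definition A1 :: "nat \<Rightarrow> (real \<Rightarrow> complex) \<Rightarrow> complex \<Rightarrow> (real \<Rightarrow> complex) \<Rightarrow> real \<Rightarrow> complex" where
  "A1 n v lam g = (\<lambda>x. \<Sum>i\<in>{0..n+1}. ((- (1/2) * dd (B1 v i) x) * g x + B1 v i x * dd g x) * lam ^ (n + 1 - i))"

definition Q1 :: "nat \<Rightarrow> nat \<Rightarrow> complex \<Rightarrow> complex \<Rightarrow> (real \<Rightarrow> complex) \<Rightarrow> (nat \<Rightarrow> real \<Rightarrow> complex)
   \<Rightarrow> complex \<Rightarrow> (real \<Rightarrow> complex) \<Rightarrow> real \<Rightarrow> complex" where
  "Q1 n N alpha eta v ph lam g = (\<lambda>x. A1 n v lam g x + eta * g x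
      + alpha * (\<Sum>j\<in>{1..N}. ph j x * II (\<lambda>y. ph j y * g y) x))"

lemma A1_eq:
  assumes "\<And>i. dif (B1 v i)"
  shows "A1 n v lam g = (\<lambda>x. - (1/2) * dd (hs (B1 v) lam (n+1)) x * g x + hs (B1 v) lam (n+1) x * dd g x)"
proof
  fix x
  have e: "dd (hs (B1 v) lam (n+1)) x = hs (\<lambda>i. dd (B1 v i)) lam (n+1) x"
    using dd_hs[of "B1 v" lam "n+1", OF assms] by simp
  then show "A1 n v lam g x = - (1/2) * dd (hs (B1 v) lam (n+1)) x * g x + hs (B1 v) lam (n+1) x * dd g x"
    unfolding A1_def e unfolding hs_def
    by (simp add: sum.distrib sum_distrib_left sum_distrib_right algebra_simps sum_subtractf sum_negf)
qed

locale ctx1 = dctx v w s xi for v w s xi +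
  fixes f :: "real \<Rightarrow> complex" and lams :: "nat \<Rightarrow> complex" and N :: nat
    and ph phb :: "nat \<Rightarrow> real \<Rightarrow> complex"
  assumes df: "dec1 f" and f_nz: "\<And>x. f x \<noteq> 0" and s_eq: "s = (\<lambda>x. dd f x / f x)"
    and f2: "dd (dd f) = (\<lambda>x. - (xi + v x) * f x)"
    and dph: "\<And>j. j \<in> {1..N} \<Longrightarrow> dec1 (ph j)"
    and ph2: "\<And>j. j \<in> {1..N} \<Longrightarrow> dd (dd (ph j)) = (\<lambda>x. - (lams j + v x) * ph j x)"
    and lxi: "\<And>j. j \<in> {1..N} \<Longrightarrow> lams j \<noteq> xi"
    and phb_eq: "\<And>j. j \<in> {1..N} \<Longrightarrow> phb j = (\<lambda>x. (1 / csqrt (lams j - xi)) * (dd (ph j) x - s x * ph j x))"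
    and dphb: "\<And>j. j \<in> {1..N} \<Longrightarrow> dec1 (phb j)"
begin

lemma ds_eq: "dd s = (\<lambda>x. - xi - s x * s x - v x)"
  using v_eq by (auto simp: fun_eq_iff algebra_simps)

lemma df_eq: "dd f = (\<lambda>x. s x * f x)"
  using f_nz unfolding s_eq by (auto simp: fun_eq_iff)

lemma sf: "sm f" using df dec1_z0 z0_sm by blast

lemma tilde_lim:
  assumes j: "j \<in> {1..N}"
  shows "((\<lambda>x. dd (ph j) x - s x * ph j x) \<longlongrightarrow> 0) at_bot"
proof -
  have c: "csqrt (lams j - xi) \<noteq> 0" using lxi[OF j] by simp
  have "(\<lambda>x. dd (ph j) x - s x * ph j x) = (\<lambda>x. csqrt (lams j - xi) * phb j x)"
    using phb_eq[OF j] c by (auto simp: fun_eq_iff)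
  moreover have "((\<lambda>x. csqrt (lams j - xi) * phb j x) \<longlongrightarrow> csqrt (lams j - xi) * 0) at_bot"
    using dphb[OF j] dec1_z0 z0_lim by (intro tendsto_mult tendsto_const) blast
  ultimately show ?thesis by simp
qed

lemma S1:
  assumes j: "j \<in> {1..N}"
  shows "II (\<lambda>y. ph j y * f y) = (\<lambda>x. (- 1 / (lams j - xi)) * ((dd (ph j) x - s x * ph j x) * f x))"
proof (rule eq_by_deriv)
  note P = dec1_facts[OF dph[OF j]] and F = dec1_facts[OF df]
  have a: "ai (\<lambda>y. ph j y * f y)" using ai_mult_lm P F by blast
  have d: "dif (\<lambda>y. ph j y * f y)" using P F by (intro dif_mult)
  show "dif (II (\<lambda>y. ph j y * f y))" using II_dif a d by blast
  have sph: "sm (ph j)" using P by blast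
  show "dif (\<lambda>x. (- 1 / (lams j - xi)) * ((dd (ph j) x - s x * ph j x) * f x))"
    using sph sf ss by (simp only: ddrules)
  have l: "lams j - xi \<noteq> 0" using lxi[OF j] by simp
  show "dd (II (\<lambda>y. ph j y * f y)) = dd (\<lambda>x. (- 1 / (lams j - xi)) * ((dd (ph j) x - s x * ph j x) * f x))"
    using sph sf ss
    apply (simp only: dd_II[OF a d] ddrules ph2[OF j] ds_eq df_eq)
    apply (rule ext)
    using l apply (simp add: field_simps)
    done
  show "(II (\<lambda>y. ph j y * f y) \<longlongrightarrow> 0) at_bot" using II_lim a by blast
  have "((\<lambda>x. (- 1 / (lams j - xi)) * ((dd (ph j) x - s x * ph j x) * f x)) \<longlongrightarrow> (- 1 / (lams j - xi)) * (0 * 0)) at_bot"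
    using tilde_lim[OF j] F z0_lim by (intro tendsto_mult tendsto_const) blast+
  then show "((\<lambda>x. (- 1 / (lams j - xi)) * ((dd (ph j) x - s x * ph j x) * f x)) \<longlongrightarrow> 0) at_bot" by simp
qed

lemma eig_tilde:
  assumes g: "sm g" and g2: "dd (dd g) = (\<lambda>x. - (l + v x) * g x)"
  shows "dd (dd (\<lambda>x. dd g x - s x * g x)) = (\<lambda>x. - (l + w x) * (dd g x - s x * g x))"
  unfolding w_eq
  using g ss sv
  apply (simp only: ddrules g2 ds_eq)
  apply (rule ext)
  apply (simp add: algebra_simps)
  done

lemma kk: "j \<in> {1..N} \<Longrightarrow> (1 / csqrt (lams j - xi)) * (1 / csqrt (lams j - xi)) = 1 / (lams j - xi)"
proof -
  have "csqrt (lams j - xi) * csqrt (lams j - xi) = lams j - xi" using power2_csqrt[of "lams j - xi"]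
    by (simp add: power2_eq_square)
  then show "(1 / csqrt (lams j - xi)) * (1 / csqrt (lams j - xi)) = 1 / (lams j - xi)"
    by (metis divide_divide_eq_left' divide_divide_eq_right div_by_1 times_divide_eq_right mult_1)
qed

end

locale ctx2 = ctx1 v w s xi f lams N ph phb for v w s xi f lams N ph phb +
  fixes psi :: "real \<Rightarrow> complex" and lam :: complex
  assumes dpsi: "dec1 psi" and psi2: "dd (dd psi) = (\<lambda>x. - (lam + v x) * psi x)"
    and dpb: "dec1 (\<lambda>x. dd psi x - s x * psi x)"
begin

lemma spsi: "sm psi" using dpsi dec1_z0 z0_sm by blast

lemma S2:
  assumes j: "j \<in> {1..N}"
  shows "II (\<lambda>y. phb j y * (dd psi y - s y * psi y)) = (\<lambda>x. (1 / csqrt (lams j - xi)) *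
     ((dd (ph j) x - s x * ph j x) * psi x + (lams j - xi) * II (\<lambda>y. ph j y * psi y) x))"
proof (rule eq_by_deriv)
  note P = dec1_facts[OF dph[OF j]] and Pb = dec1_facts[OF dphb[OF j]]
    and Ps = dec1_facts[OF dpsi] and PB = dec1_facts[OF dpb]
  have a: "ai (\<lambda>y. phb j y * (dd psi y - s y * psi y))" using ai_mult_lm Pb PB by blast
  have d: "dif (\<lambda>y. phb j y * (dd psi y - s y * psi y))" using Pb PB by (intro dif_mult)
  show "dif (II (\<lambda>y. phb j y * (dd psi y - s y * psi y)))" using II_dif a d by blast
  have a2: "ai (\<lambda>y. ph j y * psi y)" using ai_mult_lm P Ps by blast
  have d2: "dif (\<lambda>y. ph j y * psi y)" using P Ps by (intro dif_mult)
  have dI2: "dif (II (\<lambda>y. ph j y * psi y))" using II_dif a2 d2 by blast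
  have sph: "sm (ph j)" using P by blast
  show "dif (\<lambda>x. (1 / csqrt (lams j - xi)) *
     ((dd (ph j) x - s x * ph j x) * psi x + (lams j - xi) * II (\<lambda>y. ph j y * psi y) x))"
    using sph spsi ss dI2 by (simp only: ddrules)
  show "dd (II (\<lambda>y. phb j y * (dd psi y - s y * psi y))) = dd (\<lambda>x. (1 / csqrt (lams j - xi)) *
     ((dd (ph j) x - s x * ph j x) * psi x + (lams j - xi) * II (\<lambda>y. ph j y * psi y) x))"
    using sph spsi ss dI2
    apply (simp only: dd_II[OF a d])
    using sv apply (simp only: dd_II[OF a2 d2] ddrules ph2[OF j] ds_eq phb_eq[OF j])
    apply (rule ext)
    using lxi[OF j] apply (simp add: algebra_simps)
    using lxi[OF j] apply (simp add: field_simps)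
    done
  show "(II (\<lambda>y. phb j y * (dd psi y - s y * psi y)) \<longlongrightarrow> 0) at_bot" using II_lim a by blast
  have "((\<lambda>x. (1 / csqrt (lams j - xi)) *
     ((dd (ph j) x - s x * ph j x) * psi x + (lams j - xi) * II (\<lambda>y. ph j y * psi y) x)) \<longlongrightarrow>
     (1 / csqrt (lams j - xi)) * (0 * 0 + (lams j - xi) * 0)) at_bot"
    using tilde_lim[OF j] Ps z0_lim II_lim[OF a2] by (intro tendsto_mult tendsto_add tendsto_const) blast+
  then show "((\<lambda>x. (1 / csqrt (lams j - xi)) *
     ((dd (ph j) x - s x * ph j x) * psi x + (lams j - xi) * II (\<lambda>y. ph j y * psi y) x)) \<longlongrightarrow> 0) at_bot"
    by simp
qed

end

context ctx2
begin

lemma SRC: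
  assumes j: "j \<in> {1..N}"
  shows "dd (\<lambda>x. ph j x * II (\<lambda>y. ph j y * psi y) x) x
    - dd (\<lambda>x. (- 1 / (lams j - xi)) * (ph j x * (dd (ph j) x - s x * ph j x))) x * psi x
    - s x * (ph j x * II (\<lambda>y. ph j y * psi y) x)
    = phb j x * II (\<lambda>y. phb j y * (dd psi y - s y * psi y)) x"
proof -
  note P = dec1_facts[OF dph[OF j]] and Ps = dec1_facts[OF dpsi]
  have a2: "ai (\<lambda>y. ph j y * psi y)" using ai_mult_lm P Ps by blast
  have d2: "dif (\<lambda>y. ph j y * psi y)" using P Ps by (intro dif_mult)
  have dI2: "dif (II (\<lambda>y. ph j y * psi y))" using II_dif a2 d2 by blast
  have sph: "sm (ph j)" using P by blast
  define I where "I = II (\<lambda>y. ph j y * psi y)"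
  define c where "c = lams j - xi"
  have c: "c \<noteq> 0" using lxi[OF j] by (simp add: c_def)
  have e1: "dd (\<lambda>x. ph j x * I x) x = ph j x * (ph j x * psi x) + dd (ph j) x * I x"
    unfolding I_def using sph dI2 by (simp add: dd_mult dd_II[OF a2 d2] sm_dif)
  have e2: "dd (\<lambda>x. (- 1 / c) * (ph j x * (dd (ph j) x - s x * ph j x))) x
      = (- 1 / c) * (ph j x * ((- (lams j + v x) * ph j x) - (s x * dd (ph j) x + (- xi - s x * s x - v x) * ph j x))
          + dd (ph j) x * (dd (ph j) x - s x * ph j x))"
    using sph ss sv by (simp only: ddrules ph2[OF j] ds_eq)
  have e3: "phb j x * II (\<lambda>y. phb j y * (dd psi y - s y * psi y)) x
      = ((1 / csqrt c) * (1 / csqrt c)) * ((dd (ph j) x - s x * ph j x) *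
          ((dd (ph j) x - s x * ph j x) * psi x + c * I x))"
    apply (subst S2[OF j])
    unfolding I_def c_def by (simp add: phb_eq[OF j] algebra_simps)
  have e4: "(1 / csqrt c) * (1 / csqrt c) = 1 / c" unfolding c_def by (rule kk[OF j])
  show ?thesis
    unfolding I_def[symmetric] c_def[symmetric] e1 e2 e3 e4
    using c by (simp add: field_simps c_def)
qed

lemma comb_lin:
  fixes dAp dAQ p sx Ap RA S1 S2 S3 S4 pbx dp et al :: complex
  assumes "dAp - dAQ * p - sx * Ap = RA" "S1 - S2 * p - sx * S3 = S4" "pbx = dp - sx * p"
  shows "(dAp + et * dp + al * S1) - (dAQ + al * S2) * p - sx * (Ap + et * p + al * S3)
     = RA + et * pbx + al * S4"
proof -
  have "(dAp + et * dp + al * S1) - (dAQ + al * S2) * p - sx * (Ap + et * p + al * S3)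
     = (dAp - dAQ * p - sx * Ap) + et * (dp - sx * p) + al * (S1 - S2 * p - sx * S3)"
    by (simp add: algebra_simps)
  then show ?thesis using assms by simp
qed

end

locale ctx3 = ctx2 v w s xi f lams N ph phb psi lam for v w s xi f lams N ph phb psi lam +
  fixes n :: nat and alpha eta :: complex
begin

definition "Gm = hs (E v xi) lam (n+1)"
definition "QQ = E v xi (Suc (n+1))"
definition "tld j = (\<lambda>x. dd (ph j) x - s x * ph j x)"
definition "pb = (\<lambda>x. dd psi x - s x * psi x)"

lemma smGm: "sm Gm" unfolding Gm_def using sm_hs smE by blast
lemma smQQ: "sm QQ" unfolding QQ_def using smE by blast
lemma difBv: "dif (B1 v i)" using smB sm_dif by blast
lemma difBw: "dif (B1 w i)" using B1_zz'[OF dw] zz_sm sm_dif by blast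
lemma smph: "j \<in> {1..N} \<Longrightarrow> sm (ph j)" using dph dec1_z0 z0_sm by blast

lemma beta_eq: "hs (B1 v) lam (n+1) = (\<lambda>x. (lam - xi) * Gm x + QQ x)"
  unfolding Gm_def QQ_def by (rule hsB_eq)

lemma Bb_eq: "hs (B1 w) lam (n+1) = (\<lambda>x. (lam - xi) * Gm x + QQ x + Dop s Gm x)"
proof -
  have "B1 w = cc" using B1_w_cc by auto
  then show ?thesis using hs_cc beta_eq unfolding Gm_def by simp
qed

lemma F1: "A1 n v lam psi = (\<lambda>x. - (1/2) * dd (\<lambda>x. (lam - xi) * Gm x + QQ x) x * psi x
     + ((lam - xi) * Gm x + QQ x) * dd psi x)"
  using A1_eq[of v n lam psi, OF difBv] beta_eq by simp

lemma F2: "A1 n v xi f = (\<lambda>x. - (1/2) * dd QQ x * f x + QQ x * dd f x)"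
  using A1_eq[of v n xi f, OF difBv] hsB_xi unfolding QQ_def by simp

lemma F3: "A1 n w lam pb = (\<lambda>x. - (1/2) * dd (\<lambda>x. (lam - xi) * Gm x + QQ x + Dop s Gm x) x * pb x
     + ((lam - xi) * Gm x + QQ x + Dop s Gm x) * dd pb x)"
  using A1_eq[of w n lam pb, OF difBw] Bb_eq by simp

definition "RR = (\<lambda>x. - (1/2) * dd QQ x + s x * QQ x + eta + alpha *
     (\<Sum>j\<in>{1..N}. (- 1 / (lams j - xi)) * (ph j x * tld j x)))"

lemma F4: "Q1 n N alpha eta v ph xi f = (\<lambda>x. RR x * f x)"
proof
  fix x
  have "(\<Sum>j\<in>{1..N}. ph j x * II (\<lambda>y. ph j y * f y) x) =
        (\<Sum>j\<in>{1..N}. (- 1 / (lams j - xi)) * (ph j x * tld j x)) * f x"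
    unfolding sum_distrib_right
    by (rule sum.cong) (auto simp: S1 tld_def)
  then show "Q1 n N alpha eta v ph xi f x = RR x * f x"
    unfolding Q1_def F2 RR_def df_eq by (simp add: algebra_simps)
qed

lemma dif_src1: "j \<in> {1..N} \<Longrightarrow> dif (\<lambda>x. ph j x * II (\<lambda>y. ph j y * psi y) x)"
proof -
  assume j: "j \<in> {1..N}"
  note P = dec1_facts[OF dph[OF j]] and Ps = dec1_facts[OF dpsi]
  have a2: "ai (\<lambda>y. ph j y * psi y)" using ai_mult_lm P Ps by blast
  have d2: "dif (\<lambda>y. ph j y * psi y)" using P Ps by (intro dif_mult)
  have dI2: "dif (II (\<lambda>y. ph j y * psi y))" using II_dif a2 d2 by blast
  then show ?thesis using P by (intro dif_mult)
qed

lemma dif_src2: "j \<in> {1..N} \<Longrightarrow> dif (\<lambda>x. (- 1 / (lams j - xi)) * (ph j x * tld j x))"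
  unfolding tld_def using smph ss by (simp only: ddrules)

lemma dif_RR: "dif RR"
proof -
  have "dif (\<lambda>x. \<Sum>j\<in>{1..N}. (- 1 / (lams j - xi)) * (ph j x * tld j x))"
    apply (rule dif_sum) apply simp apply (erule dif_src2) done
  then show ?thesis unfolding RR_def using smQQ ss by (simp only: ddrules)
qed

lemma dd_RR: "dd RR = (\<lambda>x. dd (\<lambda>x. - (1/2) * dd QQ x + s x * QQ x) x
     + alpha * (\<Sum>j\<in>{1..N}. dd (\<lambda>x. (- 1 / (lams j - xi)) * (ph j x * tld j x)) x))"
proof -
  have ds: "dif (\<lambda>x. \<Sum>j\<in>{1..N}. (- 1 / (lams j - xi)) * (ph j x * tld j x))"
    apply (rule dif_sum) apply simp apply (erule dif_src2) done
  have es: "dd (\<lambda>x. \<Sum>j\<in>{1..N}. (- 1 / (lams j - xi)) * (ph j x * tld j x)) =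
      (\<lambda>x. \<Sum>j\<in>{1..N}. dd (\<lambda>x. (- 1 / (lams j - xi)) * (ph j x * tld j x)) x)"
    apply (rule dd_sum) apply simp apply (erule dif_src2) done
  have d1: "dif (\<lambda>x. - (1/2) * dd QQ x + s x * QQ x)" using smQQ ss by (simp only: ddrules)
  show ?thesis unfolding RR_def
    using d1 ds by (simp only: dd_add dd_cmult es dif_add dif_cmult dd_const dif_const add_0_right)
qed

lemma quot_RR: "(\<lambda>x. (dd (Q1 n N alpha eta v ph xi f) x * f x - Q1 n N alpha eta v ph xi f x * dd f x) / (f x)\<^sup>2) = dd RR"
proof -
  have dQ: "dif (Q1 n N alpha eta v ph xi f)" unfolding F4 using dif_RR sf sm_dif by (intro dif_mult) auto
  have "(\<lambda>x. Q1 n N alpha eta v ph xi f x / f x) = RR" unfolding F4 using f_nz by auto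
  then show ?thesis using dd_divide(1)[OF dQ sm_dif[OF sf] f_nz] by simp
qed

lemma dd_Qpsi: "dd (Q1 n N alpha eta v ph lam psi) = (\<lambda>x.
     dd (\<lambda>x. - (1/2) * dd (\<lambda>x. (lam - xi) * Gm x + QQ x) x * psi x
     + ((lam - xi) * Gm x + QQ x) * dd psi x) x + eta * dd psi x
     + alpha * (\<Sum>j\<in>{1..N}. dd (\<lambda>x. ph j x * II (\<lambda>y. ph j y * psi y) x) x))"
proof -
  have ds: "dif (\<lambda>x. \<Sum>j\<in>{1..N}. ph j x * II (\<lambda>y. ph j y * psi y) x)"
    apply (rule dif_sum) apply simp apply (erule dif_src1) done
  have es: "dd (\<lambda>x. \<Sum>j\<in>{1..N}. ph j x * II (\<lambda>y. ph j y * psi y) x) =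
      (\<lambda>x. \<Sum>j\<in>{1..N}. dd (\<lambda>x. ph j x * II (\<lambda>y. ph j y * psi y) x) x)"
    apply (rule dd_sum) apply simp apply (erule dif_src1) done
  have d1: "dif (\<lambda>x. - (1/2) * dd (\<lambda>x. (lam - xi) * Gm x + QQ x) x * psi x
     + ((lam - xi) * Gm x + QQ x) * dd psi x)" using smQQ smGm spsi by (simp only: ddrules)
  have d2: "dif (\<lambda>x. eta * psi x)" using spsi by (simp only: ddrules)
  show ?thesis unfolding Q1_def F1
    using d1 d2 ds spsi by (simp only: dd_add dd_cmult es dif_add dif_cmult sm_dif)
qed

lemma main_time:
  "(\<lambda>x. dd (Q1 n N alpha eta v ph lam psi) x
      - ((dd (Q1 n N alpha eta v ph xi f) x * f x - Q1 n N alpha eta v ph xi f x * dd f x) / (f x)\<^sup>2) * psi x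
      - s x * Q1 n N alpha eta v ph lam psi x) = Q1 n N alpha eta w phb lam pb"
proof
  fix x
  have q: "(dd (Q1 n N alpha eta v ph xi f) x * f x - Q1 n N alpha eta v ph xi f x * dd f x) / (f x)\<^sup>2 = dd RR x"
    using fun_cong[OF quot_RR, of x] by simp
  have A: "dd (\<lambda>x. - (1/2) * dd (\<lambda>x. (lam - xi) * Gm x + QQ x) x * psi x
                 + ((lam - xi) * Gm x + QQ x) * dd psi x) x
           - dd (\<lambda>x. - (1/2) * dd QQ x + s x * QQ x) x * psi x
           - s x * (- (1/2) * dd (\<lambda>x. (lam - xi) * Gm x + QQ x) x * psi x
                 + ((lam - xi) * Gm x + QQ x) * dd psi x)
       = - (1/2) * dd (\<lambda>x. (lam - xi) * Gm x + QQ x + Dop s Gm x) x * pb x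
              + ((lam - xi) * Gm x + QQ x + Dop s Gm x) * dd pb x"
    using fun_cong[OF darboux_A[OF ss smGm smQQ spsi v_eq psi2], of x]
      hsE_dd[of "n+1" lam] unfolding Gm_def QQ_def pb_def by simp
  have S: "(\<Sum>j\<in>{1..N}. dd (\<lambda>x. ph j x * II (\<lambda>y. ph j y * psi y) x) x
        - dd (\<lambda>x. (- 1 / (lams j - xi)) * (ph j x * tld j x)) x * psi x
        - s x * (ph j x * II (\<lambda>y. ph j y * psi y) x))
      = (\<Sum>j\<in>{1..N}. phb j x * II (\<lambda>y. phb j y * pb y) x)"
    apply (rule sum.cong[OF refl])
    unfolding tld_def pb_def
    apply (rule SRC)
    apply assumption
    done
  have S': "(\<Sum>j\<in>{1..N}. dd (\<lambda>x. ph j x * II (\<lambda>y. ph j y * psi y) x) x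
        - dd (\<lambda>x. (- 1 / (lams j - xi)) * (ph j x * tld j x)) x * psi x
        - s x * (ph j x * II (\<lambda>y. ph j y * psi y) x))
     = (\<Sum>j\<in>{1..N}. dd (\<lambda>x. ph j x * II (\<lambda>y. ph j y * psi y) x) x)
       - (\<Sum>j\<in>{1..N}. dd (\<lambda>x. (- 1 / (lams j - xi)) * (ph j x * tld j x)) x) * psi x
       - s x * (\<Sum>j\<in>{1..N}. ph j x * II (\<lambda>y. ph j y * psi y) x)"
    by (simp add: sum_subtractf sum_distrib_left sum_distrib_right)
  show "dd (Q1 n N alpha eta v ph lam psi) x
      - ((dd (Q1 n N alpha eta v ph xi f) x * f x - Q1 n N alpha eta v ph xi f x * dd f x) / (f x)\<^sup>2) * psi x
      - s x * Q1 n N alpha eta v ph lam psi x = Q1 n N alpha eta w phb lam pb x"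
    unfolding q dd_RR dd_Qpsi
    unfolding Q1_def F1 F3
    apply (rule comb_lin)
      apply (rule A)
     apply (rule trans[OF S'[symmetric] S])
    apply (simp add: pb_def)
    done
qed

end

lemma sigx_alg:
  fixes F0 F1 F2 R0 R1 R2 :: complex
  assumes "F0 \<noteq> 0"
  shows "(((R2 * F0 + 2 * R1 * F1 + R0 * F2) * F0 + F2 * (R0 * F0) - (F1 * (R1 * F0 + R0 * F1) + (R1 * F0 + R0 * F1) * F1)) * F0\<^sup>2
      - (F2 * F0 - F1 * F1) * (F0 * (R0 * F0) + (R0 * F0) * F0)) / (F0\<^sup>2)\<^sup>2 = R2"
  using assms by (simp add: field_simps power2_eq_square)

context ctx3
begin

lemma smtld: "j \<in> {1..N} \<Longrightarrow> sm (tld j)"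
  unfolding tld_def using smph ss by (intro sm_diff sm_mult sm_dd) auto

lemma sm_RR: "sm RR"
  unfolding RR_def
  using smQQ ss smph smtld
  by (intro sm_add sm_mult sm_sum sm_dd sm_const sm_cmult) auto

lemma src_kdv:
  assumes j: "j \<in> {1..N}"
  shows "dd (\<lambda>x. (- 1 / (lams j - xi)) * (ph j x * tld j x)) x = (ph j x)\<^sup>2 - (phb j x)\<^sup>2"
proof -
  have c: "lams j - xi \<noteq> 0" using lxi[OF j] by simp
  have e: "(phb j x)\<^sup>2 = ((1 / csqrt (lams j - xi)) * (1 / csqrt (lams j - xi))) * (tld j x)\<^sup>2"
    unfolding phb_eq[OF j] tld_def by (simp add: power2_eq_square algebra_simps)
  have "dd (\<lambda>x. (- 1 / (lams j - xi)) * (ph j x * tld j x)) x =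
     (- 1 / (lams j - xi)) * (ph j x * ((- (lams j + v x) * ph j x) - (s x * dd (ph j) x + (- xi - s x * s x - v x) * ph j x)) + dd (ph j) x * tld j x)"
    unfolding tld_def using smph[OF j] ss sv by (simp only: ddrules ph2[OF j] ds_eq)
  then show ?thesis unfolding e kk[OF j] using c by (simp add: tld_def field_simps power2_eq_square)
qed

lemma kdv_fun:
  "(\<lambda>y. - 2 * B1 w (n+2) y - 2 * alpha * (\<Sum>j\<in>{1..N}. (phb j y)\<^sup>2))
   = (\<lambda>y. - 2 * B1 v (n+2) y - 2 * alpha * (\<Sum>j\<in>{1..N}. (ph j y)\<^sup>2) + 2 * dd RR y)"
proof
  fix y
  have bw: "B1 w (n+2) y = B1 v (n+2) y + Dop s QQ y"
    using B1_w_cc[of "n+2"] unfolding cc_def QQ_def by simp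
  have d1: "dd (\<lambda>x. - (1/2) * dd QQ x + s x * QQ x) y = - (1/2) * dd (dd (dd QQ)) y * 0 + (- (1/2) * dd (dd QQ) y + (s y * dd QQ y + dd s y * QQ y))"
    using smQQ ss by (simp only: ddrules) simp
  have S: "(\<Sum>j\<in>{1..N}. dd (\<lambda>x. (- 1 / (lams j - xi)) * (ph j x * tld j x)) y)
       = (\<Sum>j\<in>{1..N}. (ph j y)\<^sup>2) - (\<Sum>j\<in>{1..N}. (phb j y)\<^sup>2)"
    unfolding sum_subtractf[symmetric] apply (rule sum.cong[OF refl]) apply (rule src_kdv) apply assumption done
  show "- 2 * B1 w (n+2) y - 2 * alpha * (\<Sum>j\<in>{1..N}. (phb j y)\<^sup>2)
      = - 2 * B1 v (n+2) y - 2 * alpha * (\<Sum>j\<in>{1..N}. (ph j y)\<^sup>2) + 2 * dd RR y"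
    unfolding bw dd_RR d1 S Dop_def by (simp add: algebra_simps)
qed

end

lemmas px_sl' = px_sl[unfolded sl_def]
lemmas bseq_sl' = bseq_sl[unfolded sl_def]

lemma sl_Qop: "sl (Qop n N alpha eta u phi lam psi) t
   = Q1 n N alpha eta (sl u t) (\<lambda>j. sl (phi j) t) lam (sl psi t)"
proof
  fix x
  have a: "aseq u i x t = - (1/2) * dd (B1 (\<lambda>y. u y t) i) x" for i
    unfolding aseq_def px_sl' bseq_sl' by simp
  have p: "pinv (\<lambda>y s. phi j y s * psi y s) x t = II (\<lambda>y. phi j y t * psi y t) x" for j
    unfolding pinv_def II_def by simp
  show "sl (Qop n N alpha eta u phi lam psi) t x = Q1 n N alpha eta (sl u t) (\<lambda>j. sl (phi j) t) lam (sl psi t) x"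
    unfolding Qop_def Aop_def Q1_def A1_def sl_def
    by (simp add: a p px_sl' bseq_sl')
qed

lemma Qop_sl: "Qop n N alpha eta u phi lam psi x t
   = Q1 n N alpha eta (sl u t) (\<lambda>j. sl (phi j) t) lam (sl psi t) x"
proof -
  have "sl (Qop n N alpha eta u phi lam psi) t x = Q1 n N alpha eta (sl u t) (\<lambda>j. sl (phi j) t) lam (sl psi t) x"
    by (simp add: sl_Qop)
  then show ?thesis by (simp add: sl_def)
qed

lemma pxpx_sl: "px (px g) x t = dd (dd (sl g t)) x"
  by (simp add: px_sl sl_px)

lemma setup_ctx1:
  assumes sol: "kdv_scs n N alpha lams u phi"
    and f1_lax: "lax_pair n N alpha eta u phi xi f1"
    and f1_nz: "\<forall>x t. f1 x t \<noteq> 0"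
    and xi_ne: "\<forall>j\<in>{1..N}. lams j \<noteq> xi"
    and dec_u: "decaying u" and dec_phi: "\<forall>j\<in>{1..N}. decaying (phi j)"
    and dec_f1: "decaying f1"
    and dec_ubar: "decaying (dt_u u f1)"
    and dec_phibar: "\<forall>j\<in>{1..N}. decaying (dt_phi lams xi f1 phi j)"
  shows "ctx1 (sl u t) (sl (dt_u u f1) t) (\<lambda>x. dd (sl f1 t) x / sl f1 t x) xi (sl f1 t) lams N
     (\<lambda>j. sl (phi j) t) (\<lambda>j. sl (dt_phi lams xi f1 phi j) t)"
proof -
  define v where "v = sl u t"
  define w where "w = sl (dt_u u f1) t"
  define F where "F = sl f1 t"
  define s where "s = (\<lambda>x. dd F x / F x)"
  have dv: "dec1 v" unfolding v_def using decaying_dec1 dec_u by blast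
  have dw: "dec1 w" unfolding w_def using decaying_dec1 dec_ubar by blast
  have dF: "dec1 F" unfolding F_def using decaying_dec1 dec_f1 by blast
  have Fnz: "\<And>x. F x \<noteq> 0" unfolding F_def sl_def using f1_nz by blast
  note FF = dec1_facts[OF dF] and VV = dec1_facts[OF dv] and WW = dec1_facts[OF dw]
  have F2: "dd (dd F) = (\<lambda>x. - (xi + v x) * F x)"
  proof
    fix x
    have "px (px f1) x t + (xi + u x t) * f1 x t = 0" using f1_lax unfolding lax_pair_def by blast
    then have "dd (dd F) x + (xi + v x) * F x = 0"
      unfolding F_def v_def pxpx_sl by (simp add: sl_def)
    then show "dd (dd F) x = - (xi + v x) * F x" by (metis add_eq_0_iff2 minus_mult_left)
  qed
  have dF1: "dif (dd F)" using FF sm_dd sm_dif by blast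
  have difs: "dif s" unfolding s_def using dd_divide(2)[OF dF1 FF(6) Fnz] .
  have ds: "dd s = (\<lambda>x. (dd (dd F) x * F x - dd F x * dd F x) / (F x)\<^sup>2)"
    unfolding s_def using dd_divide(1)[OF dF1 FF(6) Fnz] .
  have ds_v: "dd s = (\<lambda>x. - xi - s x * s x - v x)"
    unfolding ds unfolding F2 s_def using Fnz by (auto simp: fun_eq_iff field_simps power2_eq_square)
  have wv: "w = (\<lambda>x. v x + 2 * dd s x)"
    unfolding w_def v_def s_def F_def dt_u_def sl_def px_sl' by simp
  have ds_w: "dd s = (\<lambda>x. (1/2) * (w x - v x))" unfolding wv by (simp add: fun_eq_iff)
  have smds: "sm (dd s)" unfolding ds_w using WW VV by (intro sm_cmult sm_diff) auto
  have sms: "sm s" unfolding sm_def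
  proof
    fix m show "dif ((dd^^m) s)"
      using difs smds by (cases m) (auto simp: sm_def simp del: funpow.simps simp add: ddn_Suc)
  qed
  have aids: "ai (dd s)" unfolding ds_w using WW VV by (intro ai_cmult ai_diff) auto
  obtain l where "(s \<longlongrightarrow> l) at_bot" using lim_by_ai[OF difs sm_dif[OF smds] aids] by blast
  moreover have "z0 (dd s)" unfolding ds_w using WW VV by (intro z0_cmult z0_diff) auto
  ultimately have zs: "zz s" using zz_intro sms by blast
  have v_eq: "v = (\<lambda>x. - xi - s x * s x - dd s x)" unfolding ds_v by (simp add: fun_eq_iff)
  have w_eq: "w = (\<lambda>x. - xi - s x * s x + dd s x)" unfolding wv ds_v by (simp add: fun_eq_iff)
  have dctx: "dctx v w s xi" by (unfold_locales) (fact dv dw zs v_eq w_eq)+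
  show ?thesis
    unfolding v_def[symmetric] w_def[symmetric] F_def[symmetric] s_def[symmetric]
  proof (rule ctx1.intro[OF dctx], unfold_locales)
    show "dec1 F" by (fact dF)
    show "\<And>x. F x \<noteq> 0" by (fact Fnz)
    show "s = (\<lambda>x. dd F x / F x)" by (fact s_def)
    show "dd (dd F) = (\<lambda>x. - (xi + v x) * F x)" by (fact F2)
    show "\<And>j. j \<in> {1..N} \<Longrightarrow> dec1 (sl (phi j) t)" using dec_phi decaying_dec1 by blast
    show "dd (dd (sl (phi j) t)) = (\<lambda>x. - (lams j + v x) * sl (phi j) t x)" if "j \<in> {1..N}" for j
    proof
      fix x
      have "px (px (phi j)) x t + (lams j + u x t) * phi j x t = 0"
        using sol that unfolding kdv_scs_def by blast
      then have "dd (dd (sl (phi j) t)) x + (lams j + v x) * sl (phi j) t x = 0"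
        unfolding v_def pxpx_sl by (simp add: sl_def)
      then show "dd (dd (sl (phi j) t)) x = - (lams j + v x) * sl (phi j) t x"
        by (metis add_eq_0_iff2 minus_mult_left)
    qed
    show "\<And>j. j \<in> {1..N} \<Longrightarrow> lams j \<noteq> xi" using xi_ne by blast
    show "sl (dt_phi lams xi f1 phi j) t = (\<lambda>x. 1 / csqrt (lams j - xi) * (dd (sl (phi j) t) x - s x * sl (phi j) t x))"
      if "j \<in> {1..N}" for j
      unfolding dt_phi_def s_def F_def sl_def px_sl' by simp
    show "\<And>j. j \<in> {1..N} \<Longrightarrow> dec1 (sl (dt_phi lams xi f1 phi j) t)" using dec_phibar decaying_dec1 by blast
  qed
qed

lemma dec1_0: "dec1 (\<lambda>x. 0)"
proof -
  have "(dd^^m) (\<lambda>x. 0) = (\<lambda>x. 0)" for m by (induction m) auto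
  then show ?thesis unfolding dec1_def by simp
qed

locale thm_ctx =
  fixes n N :: nat and alpha eta xi :: complex and lams :: "nat \<Rightarrow> complex"
    and u f1 :: fn and phi :: "nat \<Rightarrow> fn"
  assumes sol: "kdv_scs n N alpha lams u phi"
    and f1_lax: "lax_pair n N alpha eta u phi xi f1"
    and f1_nz: "\<forall>x t. f1 x t \<noteq> 0"
    and xi_ne: "\<forall>j\<in>{1..N}. lams j \<noteq> xi"
    and dec_u: "decaying u" and dec_phi: "\<forall>j\<in>{1..N}. decaying (phi j)"
    and dec_f1: "decaying f1"
    and dec_ubar: "decaying (dt_u u f1)"
    and dec_phibar: "\<forall>j\<in>{1..N}. decaying (dt_phi lams xi f1 phi j)"
begin

abbreviation "vv t \<equiv> sl u t"
abbreviation "ww t \<equiv> sl (dt_u u f1) t"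
abbreviation "FF t \<equiv> sl f1 t"
abbreviation "ss t \<equiv> (\<lambda>x. dd (sl f1 t) x / sl f1 t x)"
abbreviation "pph t \<equiv> (\<lambda>j. sl (phi j) t)"
abbreviation "pphb t \<equiv> (\<lambda>j. sl (dt_phi lams xi f1 phi j) t)"

lemma C1: "ctx1 (vv t) (ww t) (ss t) xi (FF t) lams N (pph t) (pphb t)"
  by (rule setup_ctx1[OF sol f1_lax f1_nz xi_ne dec_u dec_phi dec_f1 dec_ubar dec_phibar])

lemma sl_dtpsi: "sl (dt_psi f1 g) t = (\<lambda>x. dd (sl g t) x - ss t x * sl g t x)"
  unfolding dt_psi_def sl_def px_sl' by simp

lemma eig_slice:
  assumes "\<forall>x t. px (px g) x t + (l + u x t) * g x t = 0"
  shows "dd (dd (sl g t)) = (\<lambda>x. - (l + vv t x) * sl g t x)"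
proof
  fix x
  have "px (px g) x t + (l + u x t) * g x t = 0" using assms by blast
  then have "dd (dd (sl g t)) x + (l + vv t x) * sl g t x = 0" unfolding pxpx_sl by (simp add: sl_def)
  then show "dd (dd (sl g t)) x = - (l + vv t x) * sl g t x" by (metis add_eq_0_iff2 minus_mult_left)
qed

lemma partIa:
  assumes dpsi: "decaying psi" and lp: "lax_pair n N alpha eta u phi lam psi"
  shows "px (px (dt_psi f1 psi)) x t + (lam + dt_u u f1 x t) * dt_psi f1 psi x t = 0"
proof -
  interpret c1: ctx1 "vv t" "ww t" "ss t" xi "FF t" lams N "pph t" "pphb t" by (rule C1)
  have e2: "dd (dd (sl psi t)) = (\<lambda>x. - (lam + vv t x) * sl psi t x)"
    using eig_slice lp unfolding lax_pair_def by blast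
  have smp: "sm (sl psi t)" using decaying_dec1[OF dpsi] dec1_z0 z0_sm by blast
  have "dd (dd (sl (dt_psi f1 psi) t)) = (\<lambda>x. - (lam + ww t x) * sl (dt_psi f1 psi) t x)"
    unfolding sl_dtpsi by (rule c1.eig_tilde[OF smp e2])
  then have "dd (dd (sl (dt_psi f1 psi) t)) x + (lam + ww t x) * sl (dt_psi f1 psi) t x = 0"
    by (simp add: algebra_simps)
  then show ?thesis unfolding pxpx_sl by (simp add: sl_def)
qed

lemma partIIb:
  assumes j: "j \<in> {1..N}"
  shows "px (px (dt_phi lams xi f1 phi j)) x t + (lams j + dt_u u f1 x t) * dt_phi lams xi f1 phi j x t = 0"
proof -
  interpret c1: ctx1 "vv t" "ww t" "ss t" xi "FF t" lams N "pph t" "pphb t" by (rule C1)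
  have smp: "sm (sl (phi j) t)" using c1.dph[OF j] dec1_z0 z0_sm by auto
  define k where "k = 1 / csqrt (lams j - xi)"
  have e: "sl (dt_phi lams xi f1 phi j) t = (\<lambda>x. k * (dd (sl (phi j) t) x - ss t x * sl (phi j) t x))"
    using c1.phb_eq[OF j] unfolding k_def by simp
  have sm2: "sm (\<lambda>x. dd (sl (phi j) t) x - ss t x * sl (phi j) t x)"
    using smp c1.ss by (intro sm_diff sm_mult sm_dd) auto
  have "dd (dd (sl (dt_phi lams xi f1 phi j) t)) = (\<lambda>x. k * dd (dd (\<lambda>x. dd (sl (phi j) t) x - ss t x * sl (phi j) t x)) x)"
    unfolding e using sm2 by (simp add: dd_cmult sm_dif sm_dd dif_cmult)
  also have "\<dots> = (\<lambda>x. - (lams j + ww t x) * sl (dt_phi lams xi f1 phi j) t x)"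
    unfolding c1.eig_tilde[OF smp c1.ph2[OF j]] e by (simp add: algebra_simps)
  finally have "dd (dd (sl (dt_phi lams xi f1 phi j) t)) x + (lams j + ww t x) * sl (dt_phi lams xi f1 phi j) t x = 0"
    by (simp add: algebra_simps)
  then show ?thesis unfolding pxpx_sl by (simp add: sl_def)
qed

lemma smooth_of: "decaying g \<Longrightarrow> smooth g" unfolding decaying_def by blast

lemma pt_fun: "lax_pair n N alpha eta u phi l g \<Longrightarrow> pt g = Qop n N alpha eta u phi l g"
  unfolding lax_pair_def by (simp add: fun_eq_iff)

lemma ptpx_sl:
  assumes "decaying g" "lax_pair n N alpha eta u phi l g"
  shows "pt (px g) x t = dd (Q1 n N alpha eta (vv t) (pph t) l (sl g t)) x"
proof -
  have "pt (px g) x t = px (pt g) x t" by (rule schwarz[OF smooth_of[OF assms(1)]])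
  also have "\<dots> = dd (sl (Qop n N alpha eta u phi l g) t) x" unfolding pt_fun[OF assms(2)] px_sl ..
  finally show ?thesis unfolding sl_Qop .
qed

lemma partIb:
  assumes dpsi: "decaying psi" and dpb: "decaying (dt_psi f1 psi)" and lp: "lax_pair n N alpha eta u phi lam psi"
  shows "pt (dt_psi f1 psi) x t = Qop n N alpha eta (dt_u u f1) (dt_phi lams xi f1 phi) lam (dt_psi f1 psi) x t"
proof -
  interpret c1: ctx1 "vv t" "ww t" "ss t" xi "FF t" lams N "pph t" "pphb t" by (rule C1)
  have e2: "dd (dd (sl psi t)) = (\<lambda>x. - (lam + vv t x) * sl psi t x)"
    using eig_slice lp unfolding lax_pair_def by blast
  have C2: "ctx2 (vv t) (ww t) (ss t) xi (FF t) lams N (pph t) (pphb t) (sl psi t) lam"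
    apply (rule ctx2.intro[OF C1])
    apply (rule ctx2_axioms.intro)
    using decaying_dec1[OF dpsi] apply simp
     apply (rule e2)
    using decaying_dec1[OF dpb] unfolding sl_dtpsi by simp
  interpret c3: ctx3 "vv t" "ww t" "ss t" xi "FF t" lams N "pph t" "pphb t" "sl psi t" lam n alpha eta
    using C2 unfolding ctx3_def by simp
  have sp: "smooth psi" using smooth_of[OF dpsi] .
  have sf: "smooth f1" using smooth_of[OF dec_f1] .
  have h1: "((\<lambda>s. px psi x s) has_vector_derivative pt (px psi) x t) (at t)"
    by (rule jd_t[OF smooth_jd0[OF smooth_px[OF sp]]])
  have h2: "((\<lambda>s. px f1 x s) has_vector_derivative pt (px f1) x t) (at t)"
    by (rule jd_t[OF smooth_jd0[OF smooth_px[OF sf]]])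
  have h3: "((\<lambda>s. f1 x s) has_vector_derivative pt f1 x t) (at t)"
    by (rule jd_t[OF smooth_jd0[OF sf]])
  have h4: "((\<lambda>s. psi x s) has_vector_derivative pt psi x t) (at t)"
    by (rule jd_t[OF smooth_jd0[OF sp]])
  have nz: "f1 x t \<noteq> 0" using f1_nz by blast
  have hd: "((\<lambda>s. px psi x s - px f1 x s / f1 x s * psi x s) has_vector_derivative
      (pt (px psi) x t - (px f1 x t / f1 x t * pt psi x t
         + (pt (px f1) x t * f1 x t - px f1 x t * pt f1 x t) / (f1 x t)\<^sup>2 * psi x t))) (at t)"
    by (rule has_vector_derivative_diff[OF h1 has_vector_derivative_mult[OF hvd_divide[OF h2 h3 nz] h4]])
  have L: "pt (dt_psi f1 psi) x t = pt (px psi) x t - (px f1 x t / f1 x t * pt psi x t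
         + (pt (px f1) x t * f1 x t - px f1 x t * pt f1 x t) / (f1 x t)\<^sup>2 * psi x t)"
  proof -
    have "pt (dt_psi f1 psi) x t = vector_derivative (\<lambda>s. dt_psi f1 psi x s) (at t)"
      by (simp only: pt_def)
    also have "(\<lambda>s. dt_psi f1 psi x s) = (\<lambda>s. px psi x s - px f1 x s / f1 x s * psi x s)"
      by (simp only: dt_psi_def)
    finally show ?thesis using vector_derivative_at[OF hd] by simp
  qed
  have M: "dd (Q1 n N alpha eta (vv t) (pph t) lam (sl psi t)) x
      - ((dd (Q1 n N alpha eta (vv t) (pph t) xi (FF t)) x * FF t x - Q1 n N alpha eta (vv t) (pph t) xi (FF t) x * dd (FF t) x) / (FF t x)\<^sup>2) * sl psi t x
      - ss t x * Q1 n N alpha eta (vv t) (pph t) lam (sl psi t) x = Q1 n N alpha eta (ww t) (pphb t) lam c3.pb x"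
    using fun_cong[OF c3.main_time, of x] by simp
  have R: "Qop n N alpha eta (dt_u u f1) (dt_phi lams xi f1 phi) lam (dt_psi f1 psi) x t
      = Q1 n N alpha eta (ww t) (pphb t) lam c3.pb x"
    unfolding Qop_sl sl_dtpsi c3.pb_def ..
  have P1: "pt (px psi) x t = dd (Q1 n N alpha eta (vv t) (pph t) lam (sl psi t)) x"
    by (rule ptpx_sl[OF dpsi lp])
  have P2: "pt (px f1) x t = dd (Q1 n N alpha eta (vv t) (pph t) xi (FF t)) x"
    by (rule ptpx_sl[OF dec_f1 f1_lax])
  have P3: "pt psi x t = Q1 n N alpha eta (vv t) (pph t) lam (sl psi t) x"
    unfolding pt_fun[OF lp] Qop_sl ..
  have P4: "pt f1 x t = Q1 n N alpha eta (vv t) (pph t) xi (FF t) x"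
    unfolding pt_fun[OF f1_lax] Qop_sl ..
  have P5: "px f1 x t = dd (FF t) x" by (rule px_sl)
  have P6: "f1 x t = FF t x" "psi x t = sl psi t x" by (simp_all add: sl_def)
  show ?thesis
    unfolding L R P1 P2 P3 P4 P5 P6 using M by (simp add: algebra_simps)
qed

lemma partIIa:
  "pt (dt_u u f1) x t = px (\<lambda>y s. - 2 * bseq (dt_u u f1) (n + 2) y s
      - 2 * alpha * (\<Sum>j\<in>{1..N}. (dt_phi lams xi f1 phi j y s)\<^sup>2)) x t"
proof -
  interpret c1: ctx1 "vv t" "ww t" "ss t" xi "FF t" lams N "pph t" "pphb t" by (rule C1)
  have FFnz: "\<And>y. FF t y \<noteq> 0" using f1_nz by (simp add: sl_def)
  have z: "(\<lambda>x. dd (FF t) x - ss t x * FF t x) = (\<lambda>x. 0)" using FFnz by (simp add: fun_eq_iff)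
  have C2: "ctx2 (vv t) (ww t) (ss t) xi (FF t) lams N (pph t) (pphb t) (FF t) xi"
    apply (rule ctx2.intro[OF C1])
    apply (rule ctx2_axioms.intro)
      apply (rule c1.df)
     apply (rule c1.f2)
    unfolding z by (rule dec1_0)
  interpret c3: ctx3 "vv t" "ww t" "ss t" xi "FF t" lams N "pph t" "pphb t" "FF t" xi n alpha eta
    using C2 unfolding ctx3_def by simp
  define Qf where "Qf = Q1 n N alpha eta (vv t) (pph t) xi (FF t)"
  have Qf: "Qf = (\<lambda>y. c3.RR y * FF t y)" unfolding Qf_def by (rule c3.F4)
  have sR: "sm c3.RR" by (rule c3.sm_RR)
  have sF: "sm (FF t)" using c1.sf .
  have dQf: "dd Qf = (\<lambda>y. c3.RR y * dd (FF t) y + dd c3.RR y * FF t y)"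
    unfolding Qf using sR sF by (simp only: ddrules)
  have ddQf: "dd (dd Qf) = (\<lambda>y. c3.RR y * dd (dd (FF t)) y + dd c3.RR y * dd (FF t) y
       + (dd c3.RR y * dd (FF t) y + dd (dd c3.RR) y * FF t y))"
    unfolding dQf using sR sF by (simp only: ddrules)
  have sf: "smooth f1" using smooth_of[OF dec_f1] .
  have sf1: "smooth (px f1)" using smooth_px[OF sf] .
  have sf2: "smooth (px (px f1))" using smooth_px[OF sf1] .
  have sig: "px (\<lambda>y s. px f1 y s / f1 y s) x s = (px (px f1) x s * f1 x s - px f1 x s * px f1 x s) / (f1 x s * f1 x s)" for s
  proof -
    have d1: "dif (sl (px f1) s)" using smooth_slice_dif[OF sf1, of 0] by simp
    have d0: "dif (sl f1 s)" using smooth_slice_dif[OF sf, of 0] by simp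
    have nz: "\<And>y. sl f1 s y \<noteq> 0" using f1_nz by (simp add: sl_def)
    have "px (\<lambda>y s. px f1 y s / f1 y s) x s = dd (\<lambda>y. sl (px f1) s y / sl f1 s y) x"
      unfolding px_sl by (simp add: sl_def)
    also have "\<dots> = (dd (sl (px f1) s) x * sl f1 s x - sl (px f1) s x * dd (sl f1 s) x) / (sl f1 s x)\<^sup>2"
      by (simp add: dd_divide(1)[OF d1 d0 nz])
    finally show ?thesis by (simp add: px_sl power2_eq_square sl_def)
  qed
  have nz: "f1 x t * f1 x t \<noteq> 0" using f1_nz by simp
  have su: "smooth u" using smooth_of[OF dec_u] .
  have hu: "((\<lambda>s. u x s) has_vector_derivative pt u x t) (at t)" by (rule jd_t[OF smooth_jd0[OF su]])
  have hA: "((\<lambda>s. px (px f1) x s) has_vector_derivative pt (px (px f1)) x t) (at t)" by (rule jd_t[OF smooth_jd0[OF sf2]])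
  have hB: "((\<lambda>s. px f1 x s) has_vector_derivative pt (px f1) x t) (at t)" by (rule jd_t[OF smooth_jd0[OF sf1]])
  have hC: "((\<lambda>s. f1 x s) has_vector_derivative pt f1 x t) (at t)" by (rule jd_t[OF smooth_jd0[OF sf]])
  note hN = has_vector_derivative_diff[OF has_vector_derivative_mult[OF hA hC] has_vector_derivative_mult[OF hB hB]]
  note hD = has_vector_derivative_mult[OF hC hC]
  note hall = has_vector_derivative_add[OF hu has_vector_derivative_mult_right[OF hvd_divide[OF hN hD nz], of 2]]
  have "(\<lambda>s. dt_u u f1 x s) = (\<lambda>s. u x s + 2 * ((px (px f1) x s * f1 x s - px f1 x s * px f1 x s) / (f1 x s * f1 x s)))"
    by (simp add: dt_u_def sig)
  then have L: "pt (dt_u u f1) x t = pt u x t + 2 * (((px (px f1) x t * pt f1 x t + pt (px (px f1)) x t * f1 x t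
       - (px f1 x t * pt (px f1) x t + pt (px f1) x t * px f1 x t)) * (f1 x t * f1 x t)
       - (px (px f1) x t * f1 x t - px f1 x t * px f1 x t) * (f1 x t * pt f1 x t + pt f1 x t * f1 x t))
       / (f1 x t * f1 x t)\<^sup>2)"
    using vector_derivative_at[OF hall] by (simp only: pt_def)
  have e1: "sl (pt (px f1)) t = dd Qf"
    unfolding Qf_def using ptpx_sl[OF dec_f1 f1_lax] by (simp add: sl_def fun_eq_iff)
  have A': "pt (px (px f1)) x t = dd (dd Qf) x"
    using schwarz[OF sf1, of x t] px_sl[of "pt (px f1)" x t] e1 by simp
  have B': "pt (px f1) x t = dd Qf x" unfolding Qf_def by (rule ptpx_sl[OF dec_f1 f1_lax])
  have C': "pt f1 x t = Qf x" unfolding Qf_def pt_fun[OF f1_lax] Qop_sl ..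
  have A0: "px (px f1) x t = dd (dd (FF t)) x" by (rule pxpx_sl)
  have B0: "px f1 x t = dd (FF t) x" by (rule px_sl)
  have C0: "f1 x t = FF t x" by (simp add: sl_def)
  have Fx: "FF t x \<noteq> 0" using FFnz by blast
  have mid: "((dd (dd (FF t)) x * Qf x + dd (dd Qf) x * FF t x
       - (dd (FF t) x * dd Qf x + dd Qf x * dd (FF t) x)) * (FF t x * FF t x)
       - (dd (dd (FF t)) x * FF t x - dd (FF t) x * dd (FF t) x) * (FF t x * Qf x + Qf x * FF t x))
       / (FF t x * FF t x)\<^sup>2 = dd (dd c3.RR) x"
    unfolding ddQf unfolding dQf unfolding Qf using Fx by (simp add: field_simps power2_eq_square)
  define G where "G = (\<lambda>y. - 2 * B1 (vv t) (n+2) y - 2 * alpha * (\<Sum>j\<in>{1..N}. (pph t j y)\<^sup>2))"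
  have smB: "sm (B1 (vv t) (n+2))" using B1_zz'[OF c1.dv] zz_sm by blast
  have smP: "\<And>j. j \<in> {1..N} \<Longrightarrow> sm (\<lambda>y. pph t j y * pph t j y)"
    using c1.dph dec1_z0 z0_sm sm_mult by blast
  have smG: "sm G" unfolding G_def power2_eq_square
    by (intro sm_diff sm_cmult sm_sum smB smP) auto
  have Ut: "pt u x t = dd G x"
  proof -
    have "pt u x t = px (\<lambda>y s. - 2 * bseq u (n + 2) y s - 2 * alpha * (\<Sum>j\<in>{1..N}. (phi j y s)\<^sup>2)) x t"
      using sol unfolding kdv_scs_def by blast
    also have "\<dots> = dd G x" unfolding px_sl G_def by (simp del: bseq.simps B1.simps add: sl_def bseq_sl')
    finally show ?thesis .
  qed
  have Rt: "px (\<lambda>y s. - 2 * bseq (dt_u u f1) (n + 2) y s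
      - 2 * alpha * (\<Sum>j\<in>{1..N}. (dt_phi lams xi f1 phi j y s)\<^sup>2)) x t
     = dd (\<lambda>y. - 2 * B1 (ww t) (n+2) y - 2 * alpha * (\<Sum>j\<in>{1..N}. (pphb t j y)\<^sup>2)) x"
    unfolding px_sl by (simp del: bseq.simps B1.simps add: sl_def bseq_sl')
  also have "\<dots> = dd (\<lambda>y. G y + 2 * dd c3.RR y) x" unfolding c3.kdv_fun G_def ..
  also have "\<dots> = dd G x + 2 * dd (dd c3.RR) x"
    using smG sR by (simp only: ddrules)
  finally have Rt': "px (\<lambda>y s. - 2 * bseq (dt_u u f1) (n + 2) y s
      - 2 * alpha * (\<Sum>j\<in>{1..N}. (dt_phi lams xi f1 phi j y s)\<^sup>2)) x t = dd G x + 2 * dd (dd c3.RR) x" .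
  show ?thesis unfolding Rt' L Ut A' B' C' A0 B0 C0 mid ..
qed

end

theorem proposition4p1:
  fixes n N :: nat and alpha eta xi :: complex and lams :: "nat \<Rightarrow> complex"
    and u f1 :: fn and phi :: "nat \<Rightarrow> fn"
  assumes distinct: "inj_on lams {1..N}"
    and sol: "kdv_scs n N alpha lams u phi"
    and f1_lax: "lax_pair n N alpha eta u phi xi f1"
    and f1_nz: "\<forall>x t. f1 x t \<noteq> 0"
    and xi_ne: "\<forall>j\<in>{1..N}. lams j \<noteq> xi"
    and dec_u: "decaying u" and dec_phi: "\<forall>j\<in>{1..N}. decaying (phi j)"
    and dec_f1: "decaying f1"
    and dec_ubar: "decaying (dt_u u f1)"
    and dec_phibar: "\<forall>j\<in>{1..N}. decaying (dt_phi lams xi f1 phi j)"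
  shows "(\<forall>lam psi. decaying psi \<and> decaying (dt_psi f1 psi)
              \<and> lax_pair n N alpha eta u phi lam psi
            \<longrightarrow> lax_pair n N alpha eta (dt_u u f1) (dt_phi lams xi f1 phi) lam (dt_psi f1 psi))
         \<and> kdv_scs n N alpha lams (dt_u u f1) (dt_phi lams xi f1 phi)"
  proof -
  interpret T: thm_ctx n N alpha eta xi lams u f1 phi
    by (unfold_locales) (fact sol f1_lax f1_nz xi_ne dec_u dec_phi dec_f1 dec_ubar dec_phibar)+
  show ?thesis
  proof (intro conjI allI impI)
    fix lam psi
    assume a: "decaying psi \<and> decaying (dt_psi f1 psi) \<and> lax_pair n N alpha eta u phi lam psi"
    show "lax_pair n N alpha eta (dt_u u f1) (dt_phi lams xi f1 phi) lam (dt_psi f1 psi)"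
      unfolding lax_pair_def using a T.partIa T.partIb by blast
  next
    show "kdv_scs n N alpha lams (dt_u u f1) (dt_phi lams xi f1 phi)"
      unfolding kdv_scs_def using T.partIIa T.partIIb by blast
  qed
qed

end
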